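(* Let $\lambda_0 \in \mathbb{D}\setminus\{0\}$ and let $y^0=(y_1^0,\dots,y_{n-1}^0,q^0)\in \mathcal J_n \subseteq \widetilde{\mathbb G}_n$. Then the following conditions are equivalent: (1) there exists an analytic function $\psi:\mathbb{D}\to \widetilde{\mathbb G}_n$ such that $\psi(0)=(0,\dots,0)$ and $\psi(\lambda_0)=y^0$; (2) $\max_{1\le j\le n-1} \|\Phi_j(\cdot,y^0)\|_{H^\infty}\le |\lambda_0|$; (3) for each $j=1,\dots,[n/2]$: $\|\Phi_j(\cdot,y^0)\|_{H^\infty}\le|\lambda_0|$ if $|y^0_{n-j}|\le|y^0_j|$, and $\|\Phi_{n-j}(\cdot,y^0)\|_{H^\infty}\le|\lambda_0|$ if $|y^0_j|\le|y^0_{n-j}|$; (4) for each $j=1,\dots,[n/2]$: $\dfrac{\binom nj|y^0_j-\overline{y^0_{n-j}}q^0|+|y^0_jy^0_{n-j}-\binom nj^2q^0|}{\binom nj^2-|y^0_{n-j}|^2}\le|\lambda_0|$ if $|y^0_{n-j}|\le|y^0_j|$, and $\dfrac{\binom nj|y^0_{n-j}-\overline{y^0_j}q^0|+|y^0_jy^0_{n-j}-\binom nj^2q^0|}{\binom nj^2-|y^0_j|^2}\le|\lambda_0|$ if $|y^0_j|\le|y^0_{n-j}|$; (5) for each $j=1,\dots,[n/2]$: $\binom nj\lambda_0-y^0_jz-y^0_{n-j}\lambda_0w+\binom nj q^0zw\neq0$ for all $z,w\in\mathbb{D}$ if $|y^0_{n-j}|\le|y^0_j|$, and $\binom nj\lambda_0-y^0_{n-j}z-y^0_j\lambda_0w+\binom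 nj q^0zw\neq0$ for all $z,w\in\mathbb{D}$ if $|y^0_j|\le|y^0_{n-j}|$; (6) $|q^0|\le|\lambda_0|$ and for each $j=1,\dots,[n/2]$: $|y^0_j|^2+|\lambda_0|^2|y^0_{n-j}|^2-\binom nj^2|q^0|^2+2|\lambda_0||y^0_jy^0_{n-j}-\binom nj^2q^0|\le\binom nj^2|\lambda_0|^2$ if $|y^0_{n-j}|\le|y^0_j|$, and the same with $y^0_j$ and $y^0_{n-j}$ interchanged if $|y^0_j|\le|y^0_{n-j}|$; (7) for each $j=1,\dots,[n/2]$: $\big||\lambda_0|^2y^0_{n-j}-\overline{y^0_j}q^0\big|+|\lambda_0||y^0_j-\overline{y^0_{n-j}}q^0|+\binom nj|q^0|^2\le\binom nj|\lambda_0|^2$ if $|y^0_{n-j}|\le|y^0_j|$, and the same with $y^0_j$ and $y^0_{n-j}$ interchanged if $|y^0_j|\le|y^0_{n-j}|$. In particular, since $\mathcal J_n=\widetilde{\mathbb G}_n$ for $n=1,2,3$, these conditions are equivalent for every $y^0\in\widetilde{\mathbb G}_n$ when $n\le 3$.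
   Context: $\mathbb{D}$ is the open unit disc. The extended symmetrized polydisc is $\widetilde{\mathbb G}_n=\{(y_1,\dots,y_{n-1},q)\in\mathbb C^n: q\in\mathbb{D},\ y_j=\beta_j+\bar\beta_{n-j}q,\ \beta_j\in\mathbb C,\ |\beta_j|+|\beta_{n-j}|<\binom nj,\ j=1,\dots,n-1\}$. For $y=(y_1,\dots,y_{n-1},q)$ and $z\in\mathbb C$, $\Phi_j(z,y)=\dfrac{\binom nj qz-y_j}{y_{n-j}z-\binom nj}$ (and $\Phi_j(z,y)=y_j/\binom nj$ if $y_jy_{n-j}=\binom nj^2q$), and $\|\Phi_j(\cdot,y)\|_{H^\infty}=\sup_{z\in\mathbb{D}}|\Phi_j(z,y)|$. For $n$ odd, $\mathcal J_n=\{y\in\widetilde{\mathbb G}_n: y_j=\frac{\binom nj}{n}y_1,\ y_{n-j}=\frac{\binom nj}{n}y_{n-1},\ j=2,\dots,[n/2]\}$; for $n$ even, $\mathcal J_n=\{y\in\widetilde{\mathbb G}_n: y_{[n/2]}=\frac{\binom n{[n/2]}}{n}\frac{y_1+y_{n-1}}2,\ y_j=\frac{\binom nj}{n}y_1,\ y_{n-j}=\frac{\binom nj}{n}y_{n-1},\ j=2,\dots,[n/2]-1\}$. $[x]$ denotes the integer part. *)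

theory Defs
  imports "HOL-Complex_Analysis.Complex_Analysis"
begin

text \<open>A point of C^n is represented as p :: nat => complex, with coordinates
  p 1, ..., p (n-1) being y_1,...,y_{n-1} and p n being q.
  Only the coordinates 1..n are meaningful.\<close>

abbreviation bc :: "nat \<Rightarrow> nat \<Rightarrow> complex" where
  "bc n j \<equiv> of_nat (n choose j)"

definition tG :: "nat \<Rightarrow> (nat \<Rightarrow> complex) \<Rightarrow> bool" where
  "tG n p \<longleftrightarrow> norm (p n) < 1 \<and>
     (\<exists>\<beta> :: nat \<Rightarrow> complex. \<forall>j\<in>{1..n-1}.
        p j = \<beta> j + cnj (\<beta> (n - j)) * p n \<and>
        norm (\<beta> j) + norm (\<beta> (n - j)) < real (n choose j))"

definition Jn :: "nat \<Rightarrow> (nat \<Rightarrow> complex) \<Rightarrow> bool" where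
  "Jn n p \<longleftrightarrow> tG n p \<and>
     (if odd n then
        (\<forall>j\<in>{2..n div 2}. p j = bc n j / of_nat n * p 1 \<and>
                          p (n - j) = bc n j / of_nat n * p (n - 1))
      else
        p (n div 2) = bc n (n div 2) / of_nat n * ((p 1 + p (n - 1)) / 2) \<and>
        (\<forall>j\<in>{2..n div 2 - 1}. p j = bc n j / of_nat n * p 1 \<and>
                          p (n - j) = bc n j / of_nat n * p (n - 1)))"

definition Phi :: "nat \<Rightarrow> nat \<Rightarrow> (nat \<Rightarrow> complex) \<Rightarrow> complex \<Rightarrow> complex" where
  "Phi n j p z =
     (if p j * p (n - j) = (bc n j)\<^sup>2 * p n then p j / bc n j
      else (bc n j * p n * z - p j) / (p (n - j) * z - bc n j))"

definition Hinf_Phi :: "nat \<Rightarrow> nat \<Rightarrow> (nat \<Rightarrow> complex) \<Rightarrow> real" where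
  "Hinf_Phi n j p = (SUP z\<in>ball 0 1. norm (Phi n j p z))"

end

theory Submission
  imports Defs
begin


definition inE :: "complex \<Rightarrow> complex \<Rightarrow> complex \<Rightarrow> bool" where
  "inE x1 x2 x3 \<longleftrightarrow> cmod x3 < 1 \<and>
     cmod (x1 - cnj x2 * x3) + cmod (x2 - cnj x1 * x3) < 1 - (cmod x3)^2"

definition KK :: "complex \<Rightarrow> complex \<Rightarrow> complex \<Rightarrow> real" where
  "KK x1 x2 x3 = (cmod (x1 - cnj x2 * x3) + cmod (x1 * x2 - x3)) / (1 - (cmod x2)^2)"

lemmas cnj_simps = complex_cnj_diff complex_cnj_mult complex_cnj_cnj complex_cnj_add
   complex_cnj_complex_of_real complex_cnj_one complex_cnj_zero complex_cnj_power

lemma I1: "(cmod (x1 - cnj x2 * x3))^2 = (cmod (x1*x2 - x3))^2 + (1 - (cmod x2)^2)*((cmod x1)^2 - (cmod x3)^2)"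
proof -
  have "complex_of_real ((cmod (x1 - cnj x2 * x3))^2) = complex_of_real ((cmod (x1*x2 - x3))^2 + (1 - (cmod x2)^2)*((cmod x1)^2 - (cmod x3)^2))"
    by (simp only: of_real_add of_real_diff of_real_mult of_real_1 complex_norm_square cnj_simps) algebra
  then show ?thesis using of_real_eq_iff by blast
qed

lemma I2: "(cmod (x1 - cnj x2 * x3))^2 = (cmod (x2 - cnj x1 * x3))^2 + ((cmod x1)^2 - (cmod x2)^2)*(1 - (cmod x3)^2)"
proof -
  have "complex_of_real ((cmod (x1 - cnj x2 * x3))^2) = complex_of_real ((cmod (x2 - cnj x1 * x3))^2 + ((cmod x1)^2 - (cmod x2)^2)*(1 - (cmod x3)^2))"
    by (simp only: of_real_add of_real_diff of_real_mult of_real_1 complex_norm_square cnj_simps) algebra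
  then show ?thesis using of_real_eq_iff by blast
qed

lemma I3: "(cmod (complex_of_real (r^2) * x2 - cnj x1 * x3))^2 = r^2 * (cmod (x1 - cnj x2 * x3))^2 + ((cmod x1)^2 - r^2*(cmod x2)^2)*((cmod x3)^2 - r^2)"
proof -
  have "complex_of_real ((cmod (complex_of_real (r^2) * x2 - cnj x1 * x3))^2) = complex_of_real (r^2 * (cmod (x1 - cnj x2 * x3))^2 + ((cmod x1)^2 - r^2*(cmod x2)^2)*((cmod x3)^2 - r^2))"
    by (simp only: of_real_add of_real_diff of_real_mult of_real_1 complex_norm_square cnj_simps) algebra
  then show ?thesis using of_real_eq_iff by blast
qed

lemma I4: "(cmod (1 - x2*z))^2 = (cmod (z - cnj x2))^2 + (1 - (cmod z)^2)*(1 - (cmod x2)^2)"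
proof -
  have "complex_of_real ((cmod (1 - x2*z))^2) = complex_of_real ((cmod (z - cnj x2))^2 + (1 - (cmod z)^2)*(1 - (cmod x2)^2))"
    by (simp only: of_real_add of_real_diff of_real_mult of_real_1 complex_norm_square cnj_simps) algebra
  then show ?thesis using of_real_eq_iff by blast
qed

lemma mob_le: assumes "cmod z \<le> 1" "cmod x2 \<le> 1" shows "cmod (z - cnj x2) \<le> cmod (1 - x2*z)"
proof -
  have "(1 - (cmod z)^2)*(1 - (cmod x2)^2) \<ge> 0"
    using assms by (intro mult_nonneg_nonneg) (auto simp: power_le_one abs_square_le_1)
  then have "(cmod (z - cnj x2))^2 \<le> (cmod (1 - x2*z))^2" using I4[of x2 z] by linarith
  then show ?thesis by (rule power2_le_imp_le) simp
qed

lemma mob_less: assumes "cmod z < 1" "cmod x2 < 1" shows "cmod (z - cnj x2) < cmod (1 - x2*z)"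
proof -
  have "(1 - (cmod z)^2)*(1 - (cmod x2)^2) > 0"
    using assms by (intro mult_pos_pos) (auto simp: power_less_one_iff abs_square_less_1)
  then have "(cmod (z - cnj x2))^2 < (cmod (1 - x2*z))^2" using I4[of x2 z] by linarith
  then show ?thesis by (rule power2_less_imp_less) simp
qed

context
  fixes x1 x2 x3 :: complex
  assumes h2: "cmod x2 < 1"
begin

definition "vv = 1 - (cmod x2)^2"
definition "al = (x1 - cnj x2 * x3) / complex_of_real vv"
definition "be = (x1 * x2 - x3) / complex_of_real vv"

lemma vv_pos: "vv > 0"
  using h2 by (simp add: vv_def abs_square_less_1)

lemma vv_c: "complex_of_real vv = 1 - x2 * cnj x2"
  by (simp add: vv_def complex_norm_square[symmetric])

lemma divlem1: "(A::complex) / v - B / v * c = (A - B * c) / v"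
  by (simp add: diff_divide_distrib)
lemma divlem2: "(A::complex) / v * c - B / v = (A * c - B) / v"
  by (simp add: diff_divide_distrib)

lemma decomp: "x1 = al - be * cnj x2" "x3 = al * x2 - be"
proof -
  have nz: "complex_of_real vv \<noteq> 0" using vv_pos by simp
  have a: "al - be * cnj x2 = ((x1 - cnj x2*x3) - (x1*x2-x3)*cnj x2) / complex_of_real vv"
    unfolding al_def be_def by (rule divlem1)
  have b: "(x1 - cnj x2*x3) - (x1*x2-x3)*cnj x2 = complex_of_real vv * x1"
    by (simp add: vv_c) algebra
  show "x1 = al - be * cnj x2" using nz by (simp add: a b)
  have c: "al * x2 - be = ((x1 - cnj x2*x3)*x2 - (x1*x2-x3)) / complex_of_real vv"
    unfolding al_def be_def by (rule divlem2)
  have d: "(x1 - cnj x2*x3)*x2 - (x1*x2-x3) = complex_of_real vv * x3"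
    by (simp add: vv_c) algebra
  show "x3 = al * x2 - be" using nz by (simp add: c d)
qed

lemma KK_ab: "KK x1 x2 x3 = cmod al + cmod be"
  using vv_pos unfolding KK_def al_def be_def vv_def[symmetric]
  by (simp add: norm_divide add_divide_distrib)

lemma lin: "x1 - x3 * z = al * (1 - x2 * z) + be * (z - cnj x2)"
  by (subst decomp(1), subst decomp(2)) algebra

lemma Psi_bound: assumes "cmod z \<le> 1"
  shows "cmod (x1 - x3 * z) \<le> KK x1 x2 x3 * cmod (1 - x2 * z)"
proof -
  have m: "cmod (z - cnj x2) \<le> cmod (1 - x2*z)" using mob_le[OF assms] h2 by simp
  have "cmod (x1 - x3 * z) \<le> cmod al * cmod (1 - x2 * z) + cmod be * cmod (z - cnj x2)"
    unfolding lin by (metis norm_mult norm_triangle_ineq)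
  also have "\<dots> \<le> cmod al * cmod (1 - x2 * z) + cmod be * cmod (1 - x2*z)"
    using m by (simp add: mult_left_mono)
  finally show ?thesis by (simp add: KK_ab distrib_right)
qed

lemma KK_nonneg: "KK x1 x2 x3 \<ge> 0" by (simp add: KK_ab)

lemma x3_le: "cmod x3 \<le> KK x1 x2 x3"
proof -
  have "cmod x3 \<le> cmod al * cmod x2 + cmod be"
    by (subst decomp(2)) (metis norm_mult norm_triangle_ineq4)
  also have "\<dots> \<le> cmod al + cmod be" using h2 by (simp add: mult_left_le)
  finally show ?thesis by (simp add: KK_ab)
qed

lemma x1_le: "cmod x1 \<le> KK x1 x2 x3"
  using Psi_bound[of 0] by simp

lemma attain_pt: assumes "cmod u \<le> 1"
  defines "z \<equiv> (u + cnj x2) / (1 + x2 * u)"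
  shows "cmod z \<le> 1" "1 - x2 * z \<noteq> 0" "x1 - x3 * z = (al + be * u) * (1 - x2 * z)"
    "cmod u < 1 \<Longrightarrow> cmod z < 1"
proof -
  have nz: "1 + x2 * u \<noteq> 0"
  proof
    assume "1 + x2 * u = 0"
    then have "x2 * u = -1" by (simp add: add_eq_0_iff add.commute)
    then have "cmod (x2 * u) = 1" by simp
    moreover have "cmod x2 * cmod u \<le> cmod x2" using assms by (simp add: mult_left_le)
    ultimately show False using h2 by (simp add: norm_mult)
  qed
  have I: "(cmod (1 + x2*u))^2 = (cmod (u + cnj x2))^2 + (1 - (cmod u)^2)*(1 - (cmod x2)^2)"
  proof -
    have a: "cmod (-u - cnj x2) = cmod (u + cnj x2)"
    proof -
      have "-u - cnj x2 = -(u + cnj x2)" by simp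
      then show ?thesis by (simp only: norm_minus_cancel)
    qed
    have b: "1 - x2 * - u = 1 + x2 * u" by simp
    show ?thesis using I4[of x2 "-u"] unfolding a b by simp
  qed
  have u2: "(cmod u)^2 \<le> 1" using assms by (simp add: power_le_one)
  have x22: "(cmod x2)^2 < 1" using h2 by (simp add: power_less_one_iff)
  have "(1 - (cmod u)^2)*(1 - (cmod x2)^2) \<ge> 0"
    using u2 x22 by (intro mult_nonneg_nonneg) linarith+
  then have "(cmod (u + cnj x2))^2 \<le> (cmod (1 + x2*u))^2" using I by linarith
  then have "cmod (u + cnj x2) \<le> cmod (1 + x2*u)"
    by (rule power2_le_imp_le) simp
  then show "cmod z \<le> 1" using nz by (simp add: z_def norm_divide divide_le_eq_1)
  show "cmod u < 1 \<Longrightarrow> cmod z < 1"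
  proof -
    assume u1: "cmod u < 1"
    have u2': "(cmod u)^2 < 1" using u1 by (simp add: power_less_one_iff)
    have "(1 - (cmod u)^2)*(1 - (cmod x2)^2) > 0"
      using u2' x22 by (intro mult_pos_pos) linarith+
    then have "(cmod (u + cnj x2))^2 < (cmod (1 + x2*u))^2" using I by linarith
    then have "cmod (u + cnj x2) < cmod (1 + x2*u)"
      by (rule power2_less_imp_less) simp
    then show "cmod z < 1" using nz by (simp add: z_def norm_divide divide_less_eq_1)
  qed
  have zD: "z * (1 + x2 * u) = u + cnj x2" using nz by (simp add: z_def)
  have e1: "(1 - x2 * z) * (1 + x2 * u) = complex_of_real vv"
  proof -
    have "(1 - x2 * z) * (1 + x2 * u) = (1 + x2 * u) - x2 * (z * (1 + x2 * u))" by algebra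
    also have "\<dots> = complex_of_real vv" by (simp only: zD vv_c) algebra
    finally show ?thesis .
  qed
  show "1 - x2 * z \<noteq> 0" using e1 vv_pos by auto
  have nzv: "complex_of_real vv \<noteq> 0" using vv_pos by simp
  have e2: "(x1 - x3 * z) * (1 + x2 * u) = complex_of_real vv * (al + be * u)"
  proof -
    have "(x1 - x3 * z) * (1 + x2 * u) = x1 * (1 + x2 * u) - x3 * (z * (1 + x2 * u))" by algebra
    also have "\<dots> = (x1 - cnj x2 * x3) + (x1 * x2 - x3) * u" by (simp only: zD) algebra
    also have "\<dots> = complex_of_real vv * (al + be * u)"
      using nzv by (simp add: al_def be_def distrib_left)
    finally show ?thesis .
  qed
  show "x1 - x3 * z = (al + be * u) * (1 - x2 * z)"
  proof -
    have "(x1 - x3 * z) * (1 + x2 * u) = ((al + be * u) * (1 - x2 * z)) * (1 + x2 * u)"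
      using e1 e2 by (simp add: mult.assoc mult.commute)
    then show ?thesis using nz by simp
  qed
qed

end


lemma RL1:
  fixes g d v Y :: real
  assumes g0: "0 \<le> g" and d0: "0 \<le> d" and v0: "0 < v" and eq: "g^2 = d^2 + v * Y"
  shows "g + d < v \<longleftrightarrow> g < v \<and> 2*g < v + Y"
proof -
  have e: "(v - g)^2 = v * v - 2*(v * g) + g * g" by (simp add: power2_eq_square algebra_simps)
  have e2: "d^2 = g * g - v * Y" using eq by (simp add: power2_eq_square)
  have e3: "v * (2*g) = 2*(v * g)" "v * (v+Y) = v * v + v * Y" by (simp_all add: algebra_simps)
  show ?thesis
  proof
    assume h: "g + d < v"
    then have dl: "d < v - g" by linarith
    have "d^2 < (v-g)^2" by (rule power_strict_mono) (use dl d0 in auto)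
    then have "v * (2*g) < v * (v+Y)" unfolding e e2 e3 by linarith
    then have "2*g < v + Y" using v0 by simp
    then show "g < v \<and> 2*g < v + Y" using h d0 by linarith
  next
    assume h: "g < v \<and> 2*g < v + Y"
    then have "v * (2*g) < v * (v+Y)" using v0 by simp
    then have "d^2 < (v-g)^2" unfolding e e2 e3 by linarith
    then have "d < v - g" by (rule power2_less_imp_less) (use h in auto)
    then show "g + d < v" by linarith
  qed
qed

lemma inE_sym: "inE x1 x2 x3 \<longleftrightarrow> inE x2 x1 x3"
  unfolding inE_def by (auto simp: add.commute)

lemma beta_form:
  assumes "inE x1 x2 x3"
  defines "w \<equiv> 1 - (cmod x3)^2"
  defines "b1 \<equiv> (x1 - cnj x2 * x3) / complex_of_real w"
  defines "b2 \<equiv> (x2 - cnj x1 * x3) / complex_of_real w"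
  shows "x1 = b1 + cnj b2 * x3" "x2 = b2 + cnj b1 * x3" "cmod b1 + cmod b2 < 1" "w > 0"
proof -
  have x3: "cmod x3 < 1" using assms(1) by (simp add: inE_def)
  have x32: "(cmod x3)^2 < 1" using x3 by (simp add: power_less_one_iff)
  show wp: "w > 0" using x32 by (simp add: w_def)
  have wc: "complex_of_real w = 1 - x3 * cnj x3" by (simp add: w_def complex_norm_square[symmetric])
  have nz: "complex_of_real w \<noteq> 0" using wp by simp
  have e1: "complex_of_real w * (b1 + cnj b2 * x3) = (x1 - cnj x2 * x3) + cnj (x2 - cnj x1 * x3) * x3"
    using nz by (simp add: b1_def b2_def distrib_left)
  also have "\<dots> = complex_of_real w * x1" by (simp add: wc) algebra
  finally show "x1 = b1 + cnj b2 * x3" using nz by simp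
  have e2: "complex_of_real w * (b2 + cnj b1 * x3) = (x2 - cnj x1 * x3) + cnj (x1 - cnj x2 * x3) * x3"
    using nz by (simp add: b1_def b2_def distrib_left)
  also have "\<dots> = complex_of_real w * x2" by (simp add: wc) algebra
  finally show "x2 = b2 + cnj b1 * x3" using nz by simp
  have "cmod b1 + cmod b2 = (cmod (x1 - cnj x2 * x3) + cmod (x2 - cnj x1 * x3)) / w"
    using wp by (simp add: b1_def b2_def norm_divide add_divide_distrib)
  also have "\<dots> < 1" using assms(1) wp by (simp add: inE_def w_def)
  finally show "cmod b1 + cmod b2 < 1" .
qed

lemma inE_x1: assumes "inE x1 x2 x3" shows "cmod x1 < 1"
proof -
  obtain b1 b2 where e: "x1 = b1 + cnj b2 * x3" and s: "cmod b1 + cmod b2 < 1"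
    using beta_form[OF assms] by blast
  have x3: "cmod x3 < 1" using assms by (simp add: inE_def)
  have "cmod x1 \<le> cmod b1 + cmod b2 * cmod x3" unfolding e
    by (metis complex_mod_cnj norm_mult norm_triangle_ineq)
  also have "\<dots> \<le> cmod b1 + cmod b2" using x3 by (simp add: mult_left_le)
  finally show ?thesis using s by linarith
qed

lemma inE_x2: assumes "inE x1 x2 x3" shows "cmod x2 < 1"
  using inE_x1[of x2 x1 x3] assms inE_sym by blast

lemma inE_x3: assumes "inE x1 x2 x3" shows "cmod x3 < 1"
  using assms by (simp add: inE_def)

lemma gam_lt_v: assumes "inE x1 x2 x3"
  shows "cmod (x1 - cnj x2 * x3) < 1 - (cmod x2)^2"
proof -
  define w where "w = 1 - (cmod x3)^2"
  define b1 where "b1 = (x1 - cnj x2 * x3) / complex_of_real w"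
  define b2 where "b2 = (x2 - cnj x1 * x3) / complex_of_real w"
  note bf = beta_form[OF assms, folded w_def, folded b1_def b2_def]
  have x3: "cmod x3 < 1" using assms by (simp add: inE_def)
  have g: "cmod (x1 - cnj x2 * x3) = cmod b1 * w"
    using bf(4) by (simp add: b1_def norm_divide)
  have t: "cmod x2 \<le> cmod b2 + cmod b1 * cmod x3" using bf(2)
    by (metis complex_mod_cnj norm_mult norm_triangle_ineq)
  define B where "B = cmod b1"
  define e where "e = 1 - cmod x3"
  have B0: "0 \<le> B" by (simp add: B_def)
  have e0: "0 < e" "e \<le> 1" using x3 by (auto simp: e_def)
  have lt: "cmod x2 < 1 - B * e" using t bf(3) by (simp add: B_def e_def algebra_simps)
  have "0 \<le> cmod x2" by simp
  then have "(cmod x2)^2 < (1 - B*e)^2" using lt by (intro power_strict_mono) auto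
  moreover have "B * w \<le> 1 - (1 - B*e)^2"
  proof -
    have "B * w = B * e * (2 - e)" by (simp add: w_def e_def power2_eq_square algebra_simps)
    moreover have "1 - (1 - B*e)^2 = B * e * (2 - e) + B * e^2 * (1 - B)"
      by (simp add: power2_eq_square algebra_simps)
    moreover have "B * e^2 * (1 - B) \<ge> 0"
    proof -
      have "cmod b1 \<le> 1" using bf(3) norm_ge_zero[of b2] by linarith
      then show ?thesis using B0 by (intro mult_nonneg_nonneg) (auto simp: B_def)
    qed
    ultimately show ?thesis by linarith
  qed
  ultimately show ?thesis using g by (simp add: B_def)
qed

lemma inE_KK: assumes "inE x1 x2 x3" shows "KK x1 x2 x3 < 1"
proof -
  have x2: "cmod x2 < 1" by (rule inE_x2[OF assms])
  have v: "0 < 1 - (cmod x2)^2" using x2 by (simp add: power_less_one_iff)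
  have w: "0 < 1 - (cmod x3)^2" using inE_x3[OF assms] by (simp add: power_less_one_iff)
  have A: "cmod (x1 - cnj x2 * x3) + cmod (x2 - cnj x1 * x3) < 1 - (cmod x3)^2"
    using assms by (simp add: inE_def)
  have B: "2 * cmod (x1 - cnj x2 * x3) < (1 - (cmod x3)^2) + ((cmod x1)^2 - (cmod x2)^2)"
    using RL1[of "cmod (x1 - cnj x2 * x3)" "cmod (x2 - cnj x1 * x3)" "1 - (cmod x3)^2" "(cmod x1)^2 - (cmod x2)^2"]
      A w I2[of x1 x2 x3] by (simp add: algebra_simps)
  have C: "cmod (x1 - cnj x2 * x3) + cmod (x1 * x2 - x3) < 1 - (cmod x2)^2"
    using RL1[of "cmod (x1 - cnj x2 * x3)" "cmod (x1 * x2 - x3)" "1 - (cmod x2)^2" "(cmod x1)^2 - (cmod x3)^2"]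
      gam_lt_v[OF assms] B v I1[of x1 x2 x3] by (simp add: algebra_simps)
  then show ?thesis using v by (simp add: KK_def)
qed

lemma KK_inE:
  assumes x1: "cmod x1 < 1" and x2: "cmod x2 < 1" and k1: "KK x1 x2 x3 < 1" and k2: "KK x2 x1 x3 < 1"
  shows "inE x1 x2 x3"
proof -
  have v: "0 < 1 - (cmod x2)^2" using x2 by (simp add: power_less_one_iff)
  have u: "0 < 1 - (cmod x1)^2" using x1 by (simp add: power_less_one_iff)
  have C1: "cmod (x1 - cnj x2 * x3) + cmod (x1 * x2 - x3) < 1 - (cmod x2)^2"
    using k1 v by (simp add: KK_def)
  have C2: "cmod (x2 - cnj x1 * x3) + cmod (x2 * x1 - x3) < 1 - (cmod x1)^2"
    using k2 u by (simp add: KK_def)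
  have D1: "2 * cmod (x1 - cnj x2 * x3) < (1 - (cmod x2)^2) + ((cmod x1)^2 - (cmod x3)^2)"
    using RL1[of "cmod (x1 - cnj x2 * x3)" "cmod (x1 * x2 - x3)" "1 - (cmod x2)^2" "(cmod x1)^2 - (cmod x3)^2"]
      C1 v I1[of x1 x2 x3] by (simp add: algebra_simps)
  have D2: "2 * cmod (x2 - cnj x1 * x3) < (1 - (cmod x1)^2) + ((cmod x2)^2 - (cmod x3)^2)"
    using RL1[of "cmod (x2 - cnj x1 * x3)" "cmod (x2 * x1 - x3)" "1 - (cmod x1)^2" "(cmod x2)^2 - (cmod x3)^2"]
      C2 u I1[of x2 x1 x3] by (simp add: algebra_simps)
  have "cmod x3 \<le> KK x1 x2 x3" by (rule x3_le[OF x2])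
  then have x3: "cmod x3 < 1" using k1 by linarith
  show ?thesis unfolding inE_def using x3 D1 D2 by linarith
qed

lemma align: "\<exists>\<omega>. cmod \<omega> = 1 \<and> (\<forall>\<rho>\<ge>0. cmod (a + b * (complex_of_real \<rho> * \<omega>)) = cmod a + \<rho> * cmod b)"
proof (cases "a = 0 \<or> b = 0")
  case True
  then show ?thesis by (intro exI[of _ 1]) (auto simp: norm_mult)
next
  case False
  then have a0: "a \<noteq> 0" and b0: "b \<noteq> 0" by auto
  define \<omega> where "\<omega> = (a * cnj b) / complex_of_real (cmod a * cmod b)"
  have n: "cmod \<omega> = 1" using a0 b0 by (simp add: \<omega>_def norm_mult norm_divide)
  have "cmod (a + b * (complex_of_real \<rho> * \<omega>)) = cmod a + \<rho> * cmod b" if "\<rho> \<ge> 0" for \<rho>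
  proof -
    have bb: "b * cnj b = complex_of_real (cmod b * cmod b)"
      by (metis complex_norm_square power2_eq_square)
    have "b * (complex_of_real \<rho> * \<omega>) = complex_of_real \<rho> * a * (b * cnj b) / complex_of_real (cmod a * cmod b)"
      by (simp add: \<omega>_def)
    also have "\<dots> = a * complex_of_real (\<rho> * cmod b / cmod a)"
      using a0 b0 unfolding bb by (simp add: field_simps)
    finally have e: "a + b * (complex_of_real \<rho> * \<omega>) = a * complex_of_real (1 + \<rho> * cmod b / cmod a)"
      by (simp add: distrib_left)
    have p: "1 + \<rho> * cmod b / cmod a \<ge> 0" using that by simp
    have "cmod (a + b * (complex_of_real \<rho> * \<omega>)) = cmod a * (1 + \<rho> * cmod b / cmod a)"
      unfolding e norm_mult norm_of_real using p by (simp only: abs_of_nonneg)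
    also have "\<dots> = cmod a + \<rho> * cmod b" using a0 by (simp add: field_simps)
    finally show ?thesis .
  qed
  then show ?thesis using n by blast
qed

lemma KK_approx:
  assumes h2: "cmod x2 < 1" and t: "t < KK x1 x2 x3"
  shows "\<exists>z. cmod z < 1 \<and> 1 - x2 * z \<noteq> 0 \<and> t * cmod (1 - x2 * z) < cmod (x1 - x3 * z)"
proof -
  obtain \<omega> where om: "cmod \<omega> = 1" "\<And>\<rho>. \<rho> \<ge> 0 \<Longrightarrow> cmod (al x1 x2 x3 + be x1 x2 x3 * (complex_of_real \<rho> * \<omega>)) = cmod (al x1 x2 x3) + \<rho> * cmod (be x1 x2 x3)"
    using align by blast
  define K where "K = KK x1 x2 x3"
  have K: "K = cmod (al x1 x2 x3) + cmod (be x1 x2 x3)" using KK_ab[OF h2] by (simp add: K_def)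
  define \<rho> where "\<rho> = max 0 (1 - (K - t) / (2 * cmod (be x1 x2 x3) + 1))"
  have r0: "\<rho> \<ge> 0" by (simp add: \<rho>_def)
  have r1: "\<rho> < 1"
  proof -
    have "2 * cmod (be x1 x2 x3) + 1 > 0" by (simp add: add_nonneg_pos)
    then have "(K - t) / (2 * cmod (be x1 x2 x3) + 1) > 0" using t by (simp add: K_def)
    then show ?thesis by (simp add: \<rho>_def)
  qed
  have val: "cmod (al x1 x2 x3) + \<rho> * cmod (be x1 x2 x3) > t"
  proof -
    define B where "B = cmod (be x1 x2 x3)"
    have B0: "B \<ge> 0" by (simp add: B_def)
    have Kt: "K - t > 0" using t by (simp add: K_def)
    have "\<rho> \<ge> 1 - (K - t) / (2 * B + 1)" by (simp add: \<rho>_def B_def)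
    then have "\<rho> * B \<ge> (1 - (K - t) / (2 * B + 1)) * B" using B0 by (simp add: mult_right_mono)
    moreover have "(K - t) / (2 * B + 1) * B < K - t"
    proof -
      have "B / (2 * B + 1) < 1" using B0 by simp
      then have "(K - t) * (B / (2 * B + 1)) < (K - t) * 1" using Kt by (intro mult_strict_left_mono) auto
      then show ?thesis by simp
    qed
    ultimately show ?thesis using K by (simp add: B_def algebra_simps)
  qed
  define u where "u = complex_of_real \<rho> * \<omega>"
  have u1: "cmod u < 1" using r0 r1 om(1) by (simp add: u_def norm_mult)
  define z where "z = (u + cnj x2) / (1 + x2 * u)"
  have u1': "cmod u \<le> 1" using u1 by simp
  have "cmod z < 1" unfolding z_def by (rule attain_pt(4)[OF h2 u1' u1])
  moreover have nz: "1 - x2 * z \<noteq> 0" unfolding z_def by (rule attain_pt(2)[OF h2 u1'])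
  moreover have "x1 - x3 * z = (al x1 x2 x3 + be x1 x2 x3 * u) * (1 - x2 * z)"
    unfolding z_def by (rule attain_pt(3)[OF h2 u1'])
  then have "cmod (x1 - x3 * z) = (cmod (al x1 x2 x3) + \<rho> * cmod (be x1 x2 x3)) * cmod (1 - x2 * z)"
    using om(2)[OF r0] by (simp add: u_def norm_mult)
  moreover have "t * cmod (1 - x2 * z) < (cmod (al x1 x2 x3) + \<rho> * cmod (be x1 x2 x3)) * cmod (1 - x2 * z)"
    using val nz by (intro mult_strict_right_mono) auto
  ultimately show ?thesis by metis
qed


lemma KK_attain:
  assumes h2: "cmod x2 < 1"
  shows "\<exists>z. cmod z \<le> 1 \<and> 1 - x2 * z \<noteq> 0 \<and> cmod (x1 - x3 * z) = KK x1 x2 x3 * cmod (1 - x2 * z)"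
proof -
  obtain \<omega> where om: "cmod \<omega> = 1" "\<And>\<rho>. \<rho> \<ge> 0 \<Longrightarrow> cmod (al x1 x2 x3 + be x1 x2 x3 * (complex_of_real \<rho> * \<omega>)) = cmod (al x1 x2 x3) + \<rho> * cmod (be x1 x2 x3)"
    using align by blast
  have u1': "cmod \<omega> \<le> 1" using om(1) by simp
  define z where "z = (\<omega> + cnj x2) / (1 + x2 * \<omega>)"
  have "cmod z \<le> 1" unfolding z_def by (rule attain_pt(1)[OF h2 u1'])
  moreover have nz: "1 - x2 * z \<noteq> 0" unfolding z_def by (rule attain_pt(2)[OF h2 u1'])
  moreover have "x1 - x3 * z = (al x1 x2 x3 + be x1 x2 x3 * \<omega>) * (1 - x2 * z)"
    unfolding z_def by (rule attain_pt(3)[OF h2 u1'])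
  then have "cmod (x1 - x3 * z) = KK x1 x2 x3 * cmod (1 - x2 * z)"
    using om(2)[of 1] KK_ab[OF h2] by (simp add: norm_mult)
  ultimately show ?thesis by blast
qed

lemma one_minus_nz: assumes "cmod x2 < 1" "cmod z \<le> 1" shows "1 - x2 * z \<noteq> 0"
proof
  assume "1 - x2 * z = 0"
  then have "x2 * z = 1" by simp
  then have "cmod x2 * cmod z = 1" by (metis norm_mult norm_one)
  moreover have "cmod x2 * cmod z \<le> cmod x2" using assms(2) by (simp add: mult_left_le)
  ultimately show False using assms(1) by linarith
qed

lemma Psi_le: assumes "cmod x2 < 1" "cmod z \<le> 1"
  shows "cmod ((x1 - x3 * z) / (1 - x2 * z)) \<le> KK x1 x2 x3"
proof -
  have nz: "cmod (1 - x2 * z) > 0" using one_minus_nz[OF assms] by simp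
  have "cmod (x1 - x3 * z) \<le> KK x1 x2 x3 * cmod (1 - x2 * z)" by (rule Psi_bound[OF assms])
  then show ?thesis using nz by (simp add: norm_divide divide_le_eq)
qed

lemma KK_sup: assumes h2: "cmod x2 < 1"
  shows "(SUP z\<in>ball 0 1. cmod ((x1 - x3 * z) / (1 - x2 * z))) = KK x1 x2 x3"
proof -
  let ?f = "\<lambda>z. cmod ((x1 - x3 * z) / (1 - x2 * z))"
  have ub: "\<And>z. z \<in> ball 0 1 \<Longrightarrow> ?f z \<le> KK x1 x2 x3"
    using Psi_le[OF h2] by (simp add: less_imp_le)
  have ne: "ball (0::complex) 1 \<noteq> {}" by simp
  have bdd: "bdd_above (?f ` ball 0 1)" using ub by (intro bdd_aboveI) blast
  have le: "(SUP z\<in>ball 0 1. ?f z) \<le> KK x1 x2 x3" using ub ne by (intro cSUP_least) auto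
  have ge: "KK x1 x2 x3 \<le> (SUP z\<in>ball 0 1. ?f z)"
  proof (rule ccontr)
    assume "\<not> ?thesis"
    then have lt: "(SUP z\<in>ball 0 1. ?f z) < KK x1 x2 x3" by simp
    obtain z where z: "cmod z < 1" "1 - x2 * z \<noteq> 0"
      "(SUP z\<in>ball 0 1. ?f z) * cmod (1 - x2 * z) < cmod (x1 - x3 * z)"
      using KK_approx[OF h2 lt] by blast
    have "(SUP z\<in>ball 0 1. ?f z) < ?f z" using z by (simp add: norm_divide pos_less_divide_eq)
    moreover have "?f z \<le> (SUP z\<in>ball 0 1. ?f z)" using bdd z(1) by (intro cSUP_upper) auto
    ultimately show False by simp
  qed
  show ?thesis using le ge by simp
qed

definition NV :: "complex \<Rightarrow> complex \<Rightarrow> complex \<Rightarrow> bool" where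
  "NV x1 x2 x3 \<longleftrightarrow> (\<forall>z w. cmod z \<le> 1 \<longrightarrow> cmod w \<le> 1 \<longrightarrow> 1 - x1 * z - x2 * w + x3 * z * w \<noteq> 0)"

lemma NV_sym1: assumes "NV x1 x2 x3" shows "NV x2 x1 x3"
  unfolding NV_def
proof (intro allI impI)
  fix z w :: complex assume "cmod z \<le> 1" "cmod w \<le> 1"
  then have "1 - x1 * w - x2 * z + x3 * w * z \<noteq> 0" using assms by (simp add: NV_def)
  moreover have "1 - x1 * w - x2 * z + x3 * w * z = 1 - x2 * z - x1 * w + x3 * z * w" by algebra
  ultimately show "1 - x2 * z - x1 * w + x3 * z * w \<noteq> 0" by simp
qed

lemma NV_sym: "NV x1 x2 x3 \<longleftrightarrow> NV x2 x1 x3"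
  using NV_sym1 by blast

lemma NV_x2: assumes "NV x1 x2 x3" shows "cmod x2 < 1"
proof (rule ccontr)
  assume "\<not> cmod x2 < 1"
  then have x2: "cmod x2 \<ge> 1" "x2 \<noteq> 0" by auto
  define w where "w = 1 / x2"
  have wl: "cmod w \<le> 1" using x2 by (simp add: w_def norm_divide)
  have A: "\<And>z w. cmod z \<le> 1 \<Longrightarrow> cmod w \<le> 1 \<Longrightarrow> 1 - x1*z - x2*w + x3*z*w \<noteq> 0"
    using assms unfolding NV_def by blast
  have "1 - x1 * 0 - x2 * w + x3 * 0 * w \<noteq> 0" by (rule A) (use wl in simp_all)
  moreover have "x2 * w = 1" using x2 by (simp add: w_def)
  ultimately show False by simp
qed

lemma NV_KK: assumes nv: "NV x1 x2 x3" shows "KK x1 x2 x3 < 1"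
proof (rule ccontr)
  assume "\<not> KK x1 x2 x3 < 1"
  then have K1: "KK x1 x2 x3 \<ge> 1" by simp
  have h2: "cmod x2 < 1" by (rule NV_x2[OF nv])
  obtain w where w: "cmod w \<le> 1" "1 - x2 * w \<noteq> 0" "cmod (x1 - x3 * w) = KK x1 x2 x3 * cmod (1 - x2 * w)"
    using KK_attain[OF h2] by blast
  have pos: "cmod (1 - x2 * w) > 0" using w(2) by simp
  then have "cmod (x1 - x3 * w) \<ge> cmod (1 - x2 * w)" using w(3) K1 by (simp add: mult_le_cancel_right1)
  then have nz: "x1 - x3 * w \<noteq> 0" using pos by auto
  define z where "z = (1 - x2 * w) / (x1 - x3 * w)"
  have "cmod z \<le> 1" using \<open>cmod (x1 - x3 * w) \<ge> cmod (1 - x2 * w)\<close> nz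
    by (simp add: z_def norm_divide divide_le_eq_1)
  moreover have "\<And>z w. cmod z \<le> 1 \<Longrightarrow> cmod w \<le> 1 \<Longrightarrow> 1 - x1*z - x2*w + x3*z*w \<noteq> 0"
    using nv unfolding NV_def by blast
  ultimately have "1 - x1 * z - x2 * w + x3 * z * w \<noteq> 0" using w(1) by blast
  moreover have "1 - x1 * z - x2 * w + x3 * z * w = (1 - x2 * w) - z * (x1 - x3 * w)" by algebra
  moreover have "z * (x1 - x3 * w) = 1 - x2 * w" using nz by (simp add: z_def)
  ultimately show False by simp
qed

lemma NV_inE: assumes "NV x1 x2 x3" shows "inE x1 x2 x3"
proof -
  have s: "NV x2 x1 x3" using assms NV_sym by blast
  show ?thesis
    by (rule KK_inE[OF NV_x2[OF s] NV_x2[OF assms] NV_KK[OF assms] NV_KK[OF s]])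
qed


lemma frac_cmp: fixes a c u v :: real
  assumes "0 < u" "0 < v" "a * v \<le> c * u" shows "a / u \<le> c / v"
  using assms by (simp add: field_simps)

lemma KK_cmp: assumes E: "inE x1 x2 x3" and dom: "cmod x2 \<le> cmod x1"
  shows "KK x2 x1 x3 \<le> KK x1 x2 x3"
proof -
  define g where "g = cmod (x1 - cnj x2 * x3)"
  define h where "h = cmod (x2 - cnj x1 * x3)"
  define d where "d = cmod (x1 * x2 - x3)"
  define u where "u = 1 - (cmod x1)^2"
  define v where "v = 1 - (cmod x2)^2"
  define w where "w = 1 - (cmod x3)^2"
  have u0: "u > 0" using inE_x1[OF E] by (simp add: u_def power_less_one_iff)
  have v0: "v > 0" using inE_x2[OF E] by (simp add: v_def power_less_one_iff)
  have w0: "w > 0" using inE_x3[OF E] by (simp add: w_def power_less_one_iff)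
  have gh: "g + h < w" using E by (simp add: inE_def g_def h_def w_def)
  have E2: "inE x2 x1 x3" using E inE_sym by blast
  have d2: "cmod (x2 * x1 - x3) = d" by (simp add: d_def mult.commute)
  have hd: "h + d < u" using inE_KK[OF E2] u0 by (simp add: KK_def h_def d2 u_def[symmetric])
  have vu: "v - u \<ge> 0" using dom by (simp add: u_def v_def power_mono)
  have I: "g^2 = h^2 + (v - u) * w" using I2[of x1 x2 x3] by (simp add: g_def h_def u_def v_def w_def)
  have g0: "g \<ge> 0" and h0: "h \<ge> 0" and dd0: "d \<ge> 0" by (simp_all add: g_def h_def d_def)
  have key: "(g + h) * ((g + d) * u - (h + d) * v) = (v - u) * (u * w - (h + d) * (g + h))"
  proof -
    have "(g + h) * ((g + d) * u - (h + d) * v) = u * (g^2 - h^2) - (v - u) * (h + d) * (g + h)"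
      by (simp add: power2_eq_square algebra_simps)
    also have "\<dots> = (v - u) * (u * w - (h + d) * (g + h))" unfolding I by (simp add: algebra_simps)
    finally show ?thesis .
  qed
  have "(h + d) * (g + h) \<le> u * w"
    using hd gh h0 dd0 g0 by (intro mult_mono) auto
  then have rhs: "(v - u) * (u * w - (h + d) * (g + h)) \<ge> 0" using vu by simp
  have main: "(h + d) * v \<le> (g + d) * u"
  proof (cases "g + h = 0")
    case True
    then have "g = 0" "h = 0" using g0 h0 by auto
    then have "(v - u) * w = 0" using I by simp
    then have "v = u" using w0 by simp
    then show ?thesis using \<open>g = 0\<close> \<open>h = 0\<close> by simp
  next
    case False
    then have "g + h > 0" using g0 h0 by simp
    then have "(g + d) * u - (h + d) * v \<ge> 0" using key rhs
      by (metis zero_le_mult_iff not_le order_less_imp_le)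
    then show ?thesis by simp
  qed
  have "KK x2 x1 x3 = (h + d) / u" by (simp add: KK_def h_def d2 u_def)
  moreover have "KK x1 x2 x3 = (g + d) / v" by (simp add: KK_def g_def d_def v_def)
  ultimately show ?thesis using frac_cmp[OF u0 v0 main] by simp
qed

lemma cond5:
  assumes h2: "cmod x2 < 1" and l0: "l0 \<noteq> 0"
  shows "(\<forall>z\<in>ball 0 1. \<forall>w\<in>ball 0 1. l0 - x1 * z - x2 * l0 * w + x3 * z * w \<noteq> 0)
    \<longleftrightarrow> KK x1 x2 x3 \<le> cmod l0"
proof
  assume A: "\<forall>z\<in>ball 0 1. \<forall>w\<in>ball 0 1. l0 - x1 * z - x2 * l0 * w + x3 * z * w \<noteq> 0"
  show "KK x1 x2 x3 \<le> cmod l0"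
  proof (rule ccontr)
    assume "\<not> KK x1 x2 x3 \<le> cmod l0"
    then have "cmod l0 < KK x1 x2 x3" by simp
    then obtain w where w: "cmod w < 1" "1 - x2 * w \<noteq> 0" "cmod l0 * cmod (1 - x2 * w) < cmod (x1 - x3 * w)"
      using KK_approx[OF h2] by blast
    have nz: "x1 - x3 * w \<noteq> 0"
    proof
      assume "x1 - x3 * w = 0"
      then have "cmod l0 * cmod (1 - x2 * w) < 0" using w(3) by simp
      moreover have "cmod l0 * cmod (1 - x2 * w) \<ge> 0" by simp
      ultimately show False by linarith
    qed
    define z where "z = l0 * (1 - x2 * w) / (x1 - x3 * w)"
    have "cmod z < 1" using w(3) nz by (simp add: z_def norm_divide norm_mult divide_less_eq_1)
    then have "l0 - x1 * z - x2 * l0 * w + x3 * z * w \<noteq> 0" using A w(1) by auto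
    moreover have "l0 - x1 * z - x2 * l0 * w + x3 * z * w = l0 * (1 - x2 * w) - z * (x1 - x3 * w)" by algebra
    moreover have "z * (x1 - x3 * w) = l0 * (1 - x2 * w)" using nz by (simp add: z_def)
    ultimately show False by simp
  qed
next
  assume K: "KK x1 x2 x3 \<le> cmod l0"
  show "\<forall>z\<in>ball 0 1. \<forall>w\<in>ball 0 1. l0 - x1 * z - x2 * l0 * w + x3 * z * w \<noteq> 0"
  proof (intro ballI notI)
    fix z w :: complex assume z: "z \<in> ball 0 1" and w: "w \<in> ball 0 1"
      and eq: "l0 - x1 * z - x2 * l0 * w + x3 * z * w = 0"
    have zl: "cmod z < 1" and wl: "cmod w \<le> 1" using z w by auto
    have e: "l0 * (1 - x2 * w) = z * (x1 - x3 * w)"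
    proof -
      have "l0 * (1 - x2 * w) - z * (x1 - x3 * w) = l0 - x1 * z - x2 * l0 * w + x3 * z * w" by algebra
      then show ?thesis using eq by simp
    qed
    have p: "cmod (1 - x2 * w) > 0" using one_minus_nz[OF h2 wl] by simp
    have b: "cmod (x1 - x3 * w) \<le> KK x1 x2 x3 * cmod (1 - x2 * w)" by (rule Psi_bound[OF h2 wl])
    have "cmod l0 * cmod (1 - x2 * w) = cmod z * cmod (x1 - x3 * w)"
      using e by (metis norm_mult)
    also have "\<dots> \<le> cmod z * (cmod l0 * cmod (1 - x2 * w))"
      using b K p by (intro mult_left_mono) (auto intro: order_trans mult_right_mono)
    finally have "cmod l0 * cmod (1 - x2 * w) \<le> cmod z * (cmod l0 * cmod (1 - x2 * w))" .
    moreover have "cmod l0 * cmod (1 - x2 * w) > 0" using p l0 by simp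
    ultimately show False using zl by (simp add: mult_le_cancel_right1)
  qed
qed


lemma RLa: fixes A B t r :: real
  assumes A0: "0 \<le> A" and B0: "0 \<le> B" and t0: "0 \<le> t" and t1: "t \<le> 1" and s: "A + B \<le> r"
  shows "(A*t + B)^2 \<le> r^2 * t^2 + r * (1 - t^2) * B"
proof -
  have "A * t \<le> (r - B) * t" using s t0 by (intro mult_right_mono) auto
  then have l: "A*t + B \<le> r*t + B*(1-t)" by (simp add: algebra_simps)
  have "0 \<le> A*t + B" using A0 B0 t0 by simp
  then have "(A*t + B)^2 \<le> (r*t + B*(1-t))^2" using l by (intro power_mono) auto
  moreover have "r^2 * t^2 + r * (1 - t^2) * B - (r*t + B*(1-t))^2 = B * (1-t)^2 * (r - B)"
    by (simp add: power2_eq_square algebra_simps)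
  moreover have "B * (1-t)^2 * (r - B) \<ge> 0" using B0 s A0 by (intro mult_nonneg_nonneg) auto
  ultimately show ?thesis by linarith
qed

lemma RLc: fixes A B t r :: real
  assumes r0: "0 < r" and Ar: "r < A" and B0: "0 \<le> B" and BA: "B \<le> A - r"
    and t0: "0 \<le> t" and t1: "t < 1"
    and H: "r * A * (1 - t^2) + (A*t - B)^2 \<le> r^2"
  shows False
proof -
  define s where "s = A - r"
  have s0: "s > 0" using Ar by (simp add: s_def)
  have A0: "A > 0" using r0 Ar by simp
  show False
  proof (cases "A * t \<ge> s")
    case True
    then have "A*t - B \<ge> A*t - s" "A*t - s \<ge> 0" using BA by (auto simp: s_def)
    then have "(A*t - s)^2 \<le> (A*t - B)^2" by (intro power_mono) auto
    moreover have "r * A * (1 - t^2) + (A*t - s)^2 - r^2 = s * A * (1 - t)^2"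
      by (simp add: s_def power2_eq_square algebra_simps)
    moreover have "s * A * (1 - t)^2 > 0" using s0 A0 t1 by simp
    ultimately show False using H by linarith
  next
    case False
    have "A * t * t \<le> A * t" using A0 t0 t1 by (simp add: mult_left_le)
    then have "A * t^2 < s" using False by (simp add: power2_eq_square)
    then have "r * (A * t^2) < r * s" using r0 by simp
    moreover have "r * A * (1 - t^2) - r^2 = r * s - r * (A * t^2)"
      by (simp add: s_def power2_eq_square algebra_simps)
    moreover have "(A*t - B)^2 \<ge> 0" by simp
    ultimately show False using H by linarith
  qed
qed

lemma cond6:
  assumes h2: "cmod x2 < 1" and dom: "cmod x2 \<le> cmod x1" and r0: "0 < r" and r1: "r < 1"
  shows "KK x1 x2 x3 \<le> r \<longleftrightarrow> cmod x3 \<le> r \<and>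
     (cmod x1)^2 + r^2 * (cmod x2)^2 - (cmod x3)^2 + 2 * r * cmod (x1 * x2 - x3) \<le> r^2"
proof -
  define g where "g = cmod (x1 - cnj x2 * x3)"
  define d where "d = cmod (x1 * x2 - x3)"
  define v where "v = 1 - (cmod x2)^2"
  define X where "X = (cmod x1)^2 - (cmod x3)^2"
  have v0: "v > 0" using h2 by (simp add: v_def power_less_one_iff)
  have I: "g^2 = d^2 + v * X" using I1[of x1 x2 x3] by (simp add: g_def d_def v_def X_def)
  have g0: "g \<ge> 0" and d0: "d \<ge> 0" by (simp_all add: g_def d_def)
  have Keq: "KK x1 x2 x3 \<le> r \<longleftrightarrow> g + d \<le> r * v"
    using v0 by (simp add: KK_def g_def d_def v_def[symmetric] divide_le_eq)
  have rv: "r^2 * v = r^2 - r^2 * (cmod x2)^2" unfolding v_def by (simp add: right_diff_distrib)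
  have rd: "2 * r * d = 2 * (r * d)" by simp
  have T1: "X \<le> r^2 * v - 2 * (r * d)" if "(cmod x1)^2 + r^2 * (cmod x2)^2 - (cmod x3)^2 + 2 * r * d \<le> r^2"
    using that rv unfolding X_def rd by linarith
  have T2: "(cmod x1)^2 + r^2 * (cmod x2)^2 - (cmod x3)^2 + 2 * r * d \<le> r^2" if "X \<le> r^2 * v - 2 * (r * d)"
    using that rv unfolding X_def rd by linarith
  have sq: "(r * v - d)^2 = d^2 + v * (r^2 * v - 2 * (r * d))" by (simp add: power2_eq_square algebra_simps)
  show ?thesis
  proof
    assume K: "KK x1 x2 x3 \<le> r"
    then have S: "g + d \<le> r * v" using Keq by simp
    have "cmod x3 \<le> KK x1 x2 x3" by (rule x3_le[OF h2])
    then have x3: "cmod x3 \<le> r" using K by linarith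
    have "g^2 \<le> (r * v - d)^2" using S g0 by (intro power_mono) auto
    then have "v * X \<le> v * (r^2 * v - 2 * (r * d))" using I sq by linarith
    then have "X \<le> r^2 * v - 2 * (r * d)" using v0 by simp
    then show "cmod x3 \<le> r \<and> (cmod x1)^2 + r^2 * (cmod x2)^2 - (cmod x3)^2 + 2 * r * cmod (x1 * x2 - x3) \<le> r^2"
      using x3 T2 unfolding d_def by blast
  next
    assume H: "cmod x3 \<le> r \<and> (cmod x1)^2 + r^2 * (cmod x2)^2 - (cmod x3)^2 + 2 * r * cmod (x1 * x2 - x3) \<le> r^2"
    then have X: "X \<le> r^2 * v - 2 * (r * d)" using T1 unfolding d_def by blast
    have a: "(cmod x2)^2 \<le> (cmod x1)^2" using dom by (intro power_mono) auto
    have r2: "r^2 \<le> 1" using r0 r1 by (simp add: power_le_one)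
    have b: "r^2 * (cmod x2)^2 \<le> (cmod x2)^2" using r2 by (simp add: mult_left_le_one_le)
    have c: "(cmod x3)^2 \<le> r^2" using H by (intro power_mono) auto
    have rr: "r * (r * v) = r^2 * v" by (simp add: power2_eq_square)
    have "r * d \<le> r * (r * v)" using X a b c rv rr unfolding X_def by linarith
    then have dl: "d \<le> r * v" using r0 by simp
    have "v * X \<le> v * (r^2 * v - 2 * (r * d))" using X v0 by (intro mult_left_mono) auto
    then have "g^2 \<le> (r * v - d)^2" using I sq by linarith
    then have "g \<le> r * v - d" by (rule power2_le_imp_le) (use dl in auto)
    then show "KK x1 x2 x3 \<le> r" using Keq by simp
  qed
qed

lemma cond7:
  assumes h2: "cmod x2 < 1" and dom: "cmod x2 \<le> cmod x1" and r0: "0 < r" and r1: "r < 1"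
  shows "KK x1 x2 x3 \<le> r \<longleftrightarrow>
    cmod (complex_of_real (r^2) * x2 - cnj x1 * x3) + r * cmod (x1 - cnj x2 * x3) + (cmod x3)^2 \<le> r^2"
proof -
  define g where "g = cmod (x1 - cnj x2 * x3)"
  define d where "d = cmod (x1 * x2 - x3)"
  define t where "t = cmod x2"
  define v where "v = 1 - t^2"
  define X where "X = (cmod x1)^2 - (cmod x3)^2"
  define e where "e = cmod x3"
  define D where "D = (cmod x1)^2 - r^2 * t^2"
  define P where "P = r^2 - e^2"
  define mu where "mu = cmod (complex_of_real (r^2) * x2 - cnj x1 * x3)"
  define A where "A = cmod (al x1 x2 x3)"
  define B where "B = cmod (be x1 x2 x3)"
  have t0: "0 \<le> t" and t1: "t < 1" using h2 by (auto simp: t_def)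
  have v0: "v > 0" using t1 t0 by (simp add: v_def power_less_one_iff)
  have vv: "vv x2 = v" using h2 by (simp add: vv_def v_def t_def)
  have gA: "g = v * A" using h2 v0 vv by (simp add: g_def A_def al_def norm_divide)
  have dB: "d = v * B" using h2 v0 vv by (simp add: d_def B_def be_def norm_divide)
  have K: "KK x1 x2 x3 = A + B" using KK_ab[OF h2] by (simp add: A_def B_def)
  have A0: "A \<ge> 0" and B0: "B \<ge> 0" and e0: "e \<ge> 0" and mu0: "mu \<ge> 0"
    by (simp_all add: A_def B_def e_def mu_def)
  have I: "g^2 = d^2 + v * X" using I1[of x1 x2 x3] by (simp add: g_def d_def v_def t_def X_def)
  have XAB: "X = v * (A^2 - B^2)"
  proof -
    have "v * (v * A^2) = v * (v * B^2) + v * X" using I unfolding gA dB by (simp add: power2_eq_square algebra_simps)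
    then have "v * A^2 = v * B^2 + X" using v0 by (simp add: distrib_left[symmetric])
    then show ?thesis by (simp add: algebra_simps)
  qed
  define a1 where "a1 = al x1 x2 x3"
  define b1 where "b1 = be x1 x2 x3"
  have x3e: "x3 = a1 * x2 - b1" unfolding a1_def b1_def by (rule decomp(2)[OF h2])
  have eup: "e \<le> A * t + B"
  proof -
    have "cmod (a1 * x2 - b1) \<le> cmod (a1 * x2) + cmod b1" by (rule norm_triangle_ineq4)
    then show ?thesis unfolding e_def A_def B_def t_def a1_def[symmetric] b1_def[symmetric] x3e[symmetric]
      by (simp add: norm_mult)
  qed
  have elo: "\<bar>A * t - B\<bar> \<le> e"
  proof -
    have "\<bar>cmod (a1 * x2) - cmod b1\<bar> \<le> cmod (a1 * x2 - b1)" by (rule norm_triangle_ineq3)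
    then show ?thesis unfolding e_def A_def B_def t_def a1_def[symmetric] b1_def[symmetric] x3e[symmetric]
      by (simp add: norm_mult)
  qed
  have I3': "mu^2 = r^2 * g^2 + D * (e^2 - r^2)"
    using I3[of r x2 x1 x3] by (simp add: mu_def g_def D_def e_def t_def)
  have PD: "P + D = r^2 * v + X" by (simp add: P_def D_def X_def e_def v_def algebra_simps)
  have key: "(P - r * g)^2 - mu^2 = P * (P + D - 2 * r * g)"
    unfolding I3' by (simp add: P_def power2_eq_square algebra_simps)
  have PDg: "P + D - 2 * r * g = v * ((r - A)^2 - B^2)"
    unfolding PD XAB gA by (simp add: power2_eq_square algebra_simps)
  have Pg: "P - r * g = r^2 - e^2 - r * v * A" unfolding P_def gA by simp
  show ?thesis
  proof
    assume "KK x1 x2 x3 \<le> r"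
    then have s: "A + B \<le> r" using K by simp
    have "e^2 \<le> (A * t + B)^2" using eup e0 by (intro power_mono) auto
    also have "\<dots> \<le> r^2 * t^2 + r * (1 - t^2) * B" by (rule RLa[OF A0 B0 t0 _ s]) (use t1 in simp)
    finally have e2: "e^2 \<le> r^2 * t^2 + r * v * B" by (simp add: v_def)
    have "r * v * (A + B) \<le> r * v * r" using s r0 v0 by (intro mult_left_mono) auto
    then have Pge: "P - r * g \<ge> 0" using e2 unfolding Pg v_def by (simp add: power2_eq_square algebra_simps)
    have "B \<le> r - A" using s by simp
    then have "B^2 \<le> (r - A)^2" using B0 by (intro power_mono) auto
    then have "P + D - 2 * r * g \<ge> 0" unfolding PDg using v0 by simp
    moreover have "P \<ge> 0"
    proof -
      have "r * g \<ge> 0" using r0 by (simp add: g_def)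
      then show ?thesis using Pge by linarith
    qed
    ultimately have "(P - r * g)^2 - mu^2 \<ge> 0" unfolding key by simp
    then have "mu^2 \<le> (P - r * g)^2" by simp
    then have "mu \<le> P - r * g" by (rule power2_le_imp_le) (use Pge in simp)
    then show "cmod (complex_of_real (r^2) * x2 - cnj x1 * x3) + r * cmod (x1 - cnj x2 * x3) + (cmod x3)^2 \<le> r^2"
      unfolding mu_def[symmetric] g_def[symmetric] e_def[symmetric] P_def by simp
  next
    assume H: "cmod (complex_of_real (r^2) * x2 - cnj x1 * x3) + r * cmod (x1 - cnj x2 * x3) + (cmod x3)^2 \<le> r^2"
    then have H': "mu \<le> P - r * g" unfolding mu_def[symmetric] g_def[symmetric] e_def[symmetric] P_def by simp
    have g0: "g \<ge> 0" by (simp add: g_def)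
    have Pge: "P - r * g \<ge> 0" using H' mu0 by simp
    have Pg0: "P \<ge> r * g" using Pge by simp
    have rg0: "r * g \<ge> 0" using r0 g0 by simp
    have "mu^2 \<le> (P - r * g)^2" using H' mu0 by (intro power_mono) auto
    then have prod: "P * (P + D - 2 * r * g) \<ge> 0" using key by simp
    show "KK x1 x2 x3 \<le> r"
    proof (cases "P = 0")
      case True
      then have "r * g \<le> 0" using Pg0 by simp
      then have "g = 0" using r0 g0 by (simp add: mult_le_0_iff)
      then have A00: "A = 0" using gA v0 by simp
      have "e^2 = r^2" using True by (simp add: P_def)
      then have "e = r" using e0 r0 by (simp add: power2_eq_iff_nonneg)
      then have "B \<le> r" using elo A00 B0 by simp
      then show ?thesis using K A00 by simp
    next
      case False
      then have P0: "P > 0" using Pg0 rg0 by simp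
      have "P + D - 2 * r * g \<ge> 0" using prod P0 by (simp add: zero_le_mult_iff)
      then have "(r - A)^2 - B^2 \<ge> 0" unfolding PDg using v0 by (simp add: zero_le_mult_iff)
      then have BB: "B^2 \<le> (r - A)^2" by simp
      show ?thesis
      proof (cases "A \<le> r")
        case True
        then have "B \<le> r - A" by (rule_tac power2_le_imp_le[OF BB]) simp
        then show ?thesis using K by simp
      next
        case False
        then have Ar: "r < A" by simp
        have BB': "B^2 \<le> (A - r)^2" using BB by (simp add: power2_commute)
        have BAr: "B \<le> A - r" by (rule power2_le_imp_le[OF BB']) (use Ar in simp)
        have e2: "(A * t - B)^2 \<le> e^2"
        proof -
          have "\<bar>A * t - B\<bar>^2 \<le> e^2" using elo by (intro power_mono) auto
          then show ?thesis by simp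
        qed
        have "r * v * A \<le> r^2 - e^2" using Pg Pge by simp
        then have "r * A * (1 - t^2) + (A * t - B)^2 \<le> r^2" using e2 by (simp add: v_def algebra_simps)
        then show ?thesis using RLc[OF r0 Ar B0 BAr t0 t1] by blast
      qed
    qed
  qed
qed


lemma inE_scale:
  fixes C :: real assumes C0: "C > 0"
  shows "inE (a / complex_of_real C) (b / complex_of_real C) q \<longleftrightarrow>
     cmod q < 1 \<and> cmod (a - cnj b * q) + cmod (b - cnj a * q) < C * (1 - (cmod q)^2)"
proof -
  have e1: "a / complex_of_real C - cnj (b / complex_of_real C) * q = (a - cnj b * q) / complex_of_real C"
    by (simp add: diff_divide_distrib)
  have e2: "b / complex_of_real C - cnj (a / complex_of_real C) * q = (b - cnj a * q) / complex_of_real C"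
    by (simp add: diff_divide_distrib)
  have "cmod ((a - cnj b * q) / complex_of_real C) + cmod ((b - cnj a * q) / complex_of_real C)
      = (cmod (a - cnj b * q) + cmod (b - cnj a * q)) / C"
    using C0 by (simp add: norm_divide add_divide_distrib)
  then show ?thesis unfolding inE_def e1 e2 using C0 by (simp add: divide_less_eq mult.commute)
qed

lemma bc_real: "bc n j = complex_of_real (real (n choose j))" by simp

lemma bc_pos: "j \<le> n \<Longrightarrow> real (n choose j) > 0" by simp

lemma tG_iff:
  assumes n2: "n \<ge> 2"
  shows "tG n p \<longleftrightarrow> (\<forall>j\<in>{1..n-1}. inE (p j / bc n j) (p (n-j) / bc n j) (p n))"
proof
  assume "tG n p"
  then obtain \<beta> where q1: "cmod (p n) < 1" and B: "\<forall>j\<in>{1..n-1}. p j = \<beta> j + cnj (\<beta> (n - j)) * p n \<and>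
        norm (\<beta> j) + norm (\<beta> (n - j)) < real (n choose j)" unfolding tG_def by blast
  show "\<forall>j\<in>{1..n-1}. inE (p j / bc n j) (p (n-j) / bc n j) (p n)"
  proof
    fix j assume j: "j \<in> {1..n-1}"
    then have j': "n - j \<in> {1..n-1}" and nn: "n - (n - j) = j" and jn: "j \<le> n" using n2 by auto
    have C0: "real (n choose j) > 0" using jn by simp
    have pj: "p j = \<beta> j + cnj (\<beta> (n - j)) * p n" using B j by blast
    have pnj: "p (n - j) = \<beta> (n - j) + cnj (\<beta> j) * p n" using B j' nn by metis
    have bnd: "cmod (\<beta> j) + cmod (\<beta> (n - j)) < real (n choose j)" using B j by blast
    define w where "w = 1 - (cmod (p n))^2"
    have w0: "w > 0" using q1 by (simp add: w_def power_less_one_iff)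
    have wc: "complex_of_real w = 1 - p n * cnj (p n)" by (simp add: w_def complex_norm_square[symmetric])
    have a1: "p j - cnj (p (n - j)) * p n = \<beta> j * complex_of_real w"
      unfolding pj pnj wc by (simp add: cnj_simps) algebra
    have a2: "p (n - j) - cnj (p j) * p n = \<beta> (n - j) * complex_of_real w"
      unfolding pj pnj wc by (simp add: cnj_simps) algebra
    have "cmod (p j - cnj (p (n - j)) * p n) + cmod (p (n - j) - cnj (p j) * p n)
        = (cmod (\<beta> j) + cmod (\<beta> (n - j))) * w" unfolding a1 a2 using w0 by (simp add: norm_mult distrib_right)
    also have "\<dots> < real (n choose j) * w" using bnd w0 by simp
    finally show "inE (p j / bc n j) (p (n-j) / bc n j) (p n)"
      unfolding bc_real inE_scale[OF C0] using q1 by (simp add: w_def)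
  qed
next
  assume A: "\<forall>j\<in>{1..n-1}. inE (p j / bc n j) (p (n-j) / bc n j) (p n)"
  have "1 \<in> {1..n-1}" using n2 by simp
  then have q1: "cmod (p n) < 1" using A by (auto simp: inE_def)
  define w where "w = 1 - (cmod (p n))^2"
  have w0: "w > 0" using q1 by (simp add: w_def power_less_one_iff)
  have wc: "complex_of_real w = 1 - p n * cnj (p n)" by (simp add: w_def complex_norm_square[symmetric])
  define \<beta> where "\<beta> = (\<lambda>j. (p j - cnj (p (n - j)) * p n) / complex_of_real w)"
  have "\<forall>j\<in>{1..n-1}. p j = \<beta> j + cnj (\<beta> (n - j)) * p n \<and>
        norm (\<beta> j) + norm (\<beta> (n - j)) < real (n choose j)"
  proof
    fix j assume j: "j \<in> {1..n-1}"
    then have nn: "n - (n - j) = j" and jn: "j \<le> n" by auto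
    have C0: "real (n choose j) > 0" using jn by simp
    have nzw: "complex_of_real w \<noteq> 0" using w0 by simp
    have e: "\<beta> j + cnj (\<beta> (n - j)) * p n = ((p j - cnj (p (n - j)) * p n) + cnj (p (n - j) - cnj (p j) * p n) * p n) / complex_of_real w"
      unfolding \<beta>_def nn by (simp add: add_divide_distrib)
    have e2: "(p j - cnj (p (n - j)) * p n) + cnj (p (n - j) - cnj (p j) * p n) * p n = p j * complex_of_real w"
      unfolding wc by (simp add: cnj_simps) algebra
    have ok1: "p j = \<beta> j + cnj (\<beta> (n - j)) * p n" unfolding e e2 using nzw by simp
    have Aj: "inE (p j / bc n j) (p (n-j) / bc n j) (p n)" using A j by blast
    have inj: "cmod (p j - cnj (p (n - j)) * p n) + cmod (p (n - j) - cnj (p j) * p n) < real (n choose j) * w"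
      using Aj unfolding bc_real inE_scale[OF C0] by (simp add: w_def)
    have "norm (\<beta> j) + norm (\<beta> (n - j)) = (cmod (p j - cnj (p (n - j)) * p n) + cmod (p (n - j) - cnj (p j) * p n)) / w"
      unfolding \<beta>_def nn using w0 by (simp add: norm_divide add_divide_distrib)
    also have "\<dots> < real (n choose j)" using inj w0 by (simp add: divide_less_eq)
    finally show "p j = \<beta> j + cnj (\<beta> (n - j)) * p n \<and> norm (\<beta> j) + norm (\<beta> (n - j)) < real (n choose j)"
      using ok1 by simp
  qed
  then show "tG n p" unfolding tG_def using q1 by blast
qed

lemma Phi_eq:
  assumes C0: "bc n j \<noteq> 0" and nz: "p (n - j) * z \<noteq> bc n j"
  shows "Phi n j p z = (p j / bc n j - p n * z) / (1 - p (n - j) / bc n j * z)"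
proof -
  let ?C = "bc n j"
  have d: "1 - p (n - j) / ?C * z = (?C - p (n - j) * z) / ?C" using C0 by (simp add: field_simps)
  have d0: "?C - p (n - j) * z \<noteq> 0" using nz by simp
  show ?thesis
  proof (cases "p j * p (n - j) = ?C^2 * p n")
    case True
    have "(p j / ?C - p n * z) = p j / ?C * ((?C - p (n - j) * z) / ?C)"
    proof -
      have pn: "p n = p j * p (n - j) / ?C^2" using True C0 by (simp add: field_simps)
      show ?thesis unfolding pn using C0 by (simp add: field_simps power2_eq_square)
    qed
    then show ?thesis using True d d0 C0 by (simp add: Phi_def)
  next
    case False
    have "(?C * p n * z - p j) / (p (n - j) * z - ?C) = (p j - ?C * p n * z) / (?C - p (n - j) * z)"
      by (metis minus_diff_eq minus_divide_divide)
    also have "\<dots> = (p j / ?C - p n * z) / ((?C - p (n - j) * z) / ?C)"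
      using C0 d0 by (simp add: field_simps)
    finally show ?thesis using False d by (simp add: Phi_def)
  qed
qed

lemma Hinf_eq:
  assumes jn: "j \<le> n" and b: "cmod (p (n - j)) < real (n choose j)"
  shows "Hinf_Phi n j p = KK (p j / bc n j) (p (n - j) / bc n j) (p n)"
proof -
  let ?C = "bc n j"
  have C0: "real (n choose j) > 0" using jn by simp
  have Cn: "?C \<noteq> 0" using C0 by simp
  have cm: "cmod ?C = real (n choose j)" by simp
  have x2: "cmod (p (n - j) / ?C) < 1" using b C0 cm by (simp add: norm_divide)
  have "\<And>z. z \<in> ball 0 1 \<Longrightarrow> cmod (Phi n j p z) = cmod ((p j / ?C - p n * z) / (1 - p (n - j) / ?C * z))"
  proof -
    fix z :: complex assume z: "z \<in> ball 0 1"
    have "cmod (p (n - j) * z) < real (n choose j)"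
    proof -
      have "cmod (p (n - j) * z) \<le> cmod (p (n - j))" using z by (simp add: norm_mult mult_left_le)
      then show ?thesis using b by linarith
    qed
    then have "p (n - j) * z \<noteq> ?C" using cm by auto
    then show "cmod (Phi n j p z) = cmod ((p j / ?C - p n * z) / (1 - p (n - j) / ?C * z))"
      using Phi_eq[OF Cn] by simp
  qed
  then have "Hinf_Phi n j p = (SUP z\<in>ball 0 1. cmod ((p j / ?C - p n * z) / (1 - p (n - j) / ?C * z)))"
    unfolding Hinf_Phi_def by (intro SUP_cong) auto
  also have "\<dots> = KK (p j / ?C) (p (n - j) / ?C) (p n)" by (rule KK_sup[OF x2])
  finally show ?thesis .
qed


lemma RLd: fixes A B t r :: real
  assumes A0: "0 \<le> A" and B0: "0 \<le> B" and s: "A + B \<le> r" and t0: "0 \<le> t" and t1: "t \<le> 1"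
  shows "r * (1 - t^2) * A - A^2 + t^2 * (r^2 - B^2) - 2 * A * B * t \<ge> 0"
proof -
  define B' where "B' = r - A"
  have BB: "B \<le> B'" using s by (simp add: B'_def)
  have f': "r * (1 - t^2) * A - A^2 + t^2 * (r^2 - B'^2) - 2 * A * B' * t = A * B' * (1 - t)^2"
    by (simp add: B'_def power2_eq_square algebra_simps)
  have "A * B' * (1 - t)^2 \<ge> 0" using A0 B0 BB by simp
  moreover have "(r * (1 - t^2) * A - A^2 + t^2 * (r^2 - B^2) - 2 * A * B * t)
      - (r * (1 - t^2) * A - A^2 + t^2 * (r^2 - B'^2) - 2 * A * B' * t)
      = t^2 * (B'^2 - B^2) + 2 * A * t * (B' - B)"
    by (simp add: power2_eq_square algebra_simps)
  moreover have "t^2 * (B'^2 - B^2) \<ge> 0"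
  proof -
    have "B^2 \<le> B'^2" using BB B0 by (intro power_mono) auto
    then show ?thesis by simp
  qed
  moreover have "2 * A * t * (B' - B) \<ge> 0" using A0 t0 BB by simp
  ultimately show ?thesis using f' by linarith
qed

lemma constr_cond:
  assumes h2: "cmod x2 < 1" and dom: "cmod x2 \<le> cmod x1" and r0: "0 < r" and r1: "r < 1"
    and K: "KK x1 x2 x3 \<le> r"
  shows "(cmod x1)^2 - r^2 * (cmod x2)^2 + cmod (cnj x1 * x3 - complex_of_real (r^2) * x2)
          \<le> r * cmod (x1 - cnj x2 * x3)"
proof -
  define g where "g = cmod (x1 - cnj x2 * x3)"
  define d where "d = cmod (x1 * x2 - x3)"
  define t where "t = cmod x2"
  define v where "v = 1 - t^2"
  define X where "X = (cmod x1)^2 - (cmod x3)^2"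
  define e where "e = cmod x3"
  define D where "D = (cmod x1)^2 - r^2 * t^2"
  define P where "P = r^2 - e^2"
  define mu where "mu = cmod (complex_of_real (r^2) * x2 - cnj x1 * x3)"
  define A where "A = cmod (al x1 x2 x3)"
  define B where "B = cmod (be x1 x2 x3)"
  have t0: "0 \<le> t" and t1: "t < 1" using h2 by (auto simp: t_def)
  have v0: "v > 0" using t1 t0 by (simp add: v_def power_less_one_iff)
  have vv: "vv x2 = v" using h2 by (simp add: vv_def v_def t_def)
  have gA: "g = v * A" using h2 v0 vv by (simp add: g_def A_def al_def norm_divide)
  have dB: "d = v * B" using h2 v0 vv by (simp add: d_def B_def be_def norm_divide)
  have Kab: "KK x1 x2 x3 = A + B" using KK_ab[OF h2] by (simp add: A_def B_def)
  have s: "A + B \<le> r" using K Kab by simp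
  have A0: "A \<ge> 0" and B0: "B \<ge> 0" and e0: "e \<ge> 0" and mu0: "mu \<ge> 0"
    by (simp_all add: A_def B_def e_def mu_def)
  have I: "g^2 = d^2 + v * X" using I1[of x1 x2 x3] by (simp add: g_def d_def v_def t_def X_def)
  have XAB: "X = v * (A^2 - B^2)"
  proof -
    have "v * (v * A^2) = v * (v * B^2) + v * X" using I unfolding gA dB by (simp add: power2_eq_square algebra_simps)
    then have "v * A^2 = v * B^2 + X" using v0 by (simp add: distrib_left[symmetric])
    then show ?thesis by (simp add: algebra_simps)
  qed
  define a1 where "a1 = al x1 x2 x3"
  define b1 where "b1 = be x1 x2 x3"
  have x3e: "x3 = a1 * x2 - b1" unfolding a1_def b1_def by (rule decomp(2)[OF h2])
  have eup: "e \<le> A * t + B"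
  proof -
    have "cmod (a1 * x2 - b1) \<le> cmod (a1 * x2) + cmod b1" by (rule norm_triangle_ineq4)
    then show ?thesis unfolding e_def A_def B_def t_def a1_def[symmetric] b1_def[symmetric] x3e[symmetric]
      by (simp add: norm_mult)
  qed
  have I3': "mu^2 = r^2 * g^2 + D * (e^2 - r^2)"
    using I3[of r x2 x1 x3] by (simp add: mu_def g_def D_def e_def t_def)
  have PD: "P + D = r^2 * v + X" by (simp add: P_def D_def X_def e_def v_def algebra_simps)
  have PDg: "P + D - 2 * r * g = v * ((r - A)^2 - B^2)"
    unfolding PD XAB gA by (simp add: power2_eq_square algebra_simps)
  have "B^2 \<le> (r - A)^2" using s B0 by (intro power_mono) auto
  then have c1: "P + D - 2 * r * g \<ge> 0" unfolding PDg using v0 by simp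
  have D0: "D \<ge> 0"
  proof -
    have a: "(cmod x2)^2 \<le> (cmod x1)^2" using dom by (intro power_mono) auto
    have "r^2 \<le> 1" using r0 r1 by (simp add: power_le_one)
    then have b: "r^2 * t^2 \<le> t^2" by (simp add: mult_left_le_one_le)
    show ?thesis using a b unfolding D_def t_def by linarith
  qed
  have c2: "r * g - D \<ge> 0"
  proof -
    have "e^2 \<le> (A * t + B)^2" using eup e0 by (intro power_mono) auto
    moreover have "(cmod x1)^2 = X + e^2" by (simp add: X_def e_def)
    moreover have "r * (1 - t^2) * A - A^2 + t^2 * (r^2 - B^2) - 2 * A * B * t \<ge> 0"
      by (rule RLd[OF A0 B0 s t0]) (use t1 in simp)
    moreover have "r * g - D = r * v * A - X - e^2 + r^2 * t^2" unfolding gA D_def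
      using \<open>(cmod x1)^2 = X + e^2\<close> by simp
    ultimately show ?thesis unfolding XAB v_def by (simp add: power2_eq_square algebra_simps)
  qed
  have "(r * g - D)^2 - mu^2 = D * (P + D - 2 * r * g)"
    unfolding I3' by (simp add: P_def power2_eq_square algebra_simps)
  moreover have "D * (P + D - 2 * r * g) \<ge> 0" using c1 D0 by (rule mult_nonneg_nonneg[rotated])
  ultimately have "mu^2 \<le> (r * g - D)^2" by linarith
  then have "mu \<le> r * g - D" by (rule power2_le_imp_le) (use c2 in simp)
  moreover have "cmod (cnj x1 * x3 - complex_of_real (r^2) * x2) = mu"
    unfolding mu_def by (simp add: norm_minus_commute)
  ultimately show ?thesis by (simp add: D_def g_def t_def)
qed


lemma choose_beta:
  fixes D0 R :: real and m :: complex
  assumes D0: "D0 > 0" and R0: "R > 0" and le: "D0 + cmod m \<le> R"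
  shows "\<exists>\<beta> s c. 0 \<le> \<beta> \<and> 0 < s \<and> \<beta>^2 + s^2 = 1 \<and> complex_of_real \<beta> * c = m \<and>
           (D0 / s)^2 + (cmod c)^2 = R^2"
proof (cases "m = 0")
  case True
  define s where "s = D0 / R"
  define \<beta> where "\<beta> = sqrt (1 - s^2)"
  have s0: "0 < s" using D0 R0 by (simp add: s_def)
  have s1: "s \<le> 1" using le R0 True by (simp add: s_def)
  have "s^2 \<le> 1" using s0 s1 by (simp add: power_le_one)
  then have b2: "\<beta>^2 = 1 - s^2" by (simp add: \<beta>_def)
  have "(D0 / s)^2 = R^2" using D0 R0 by (simp add: s_def)
  then show ?thesis using True b2 s0 by (intro exI[of _ \<beta>] exI[of _ s] exI[of _ 0]) (simp add: \<beta>_def)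
next
  case False
  define M where "M = cmod m"
  have M0: "M > 0" using False by (simp add: M_def)
  define f where "f = (\<lambda>b::real. D0^2 / (1 - b) + M^2 / b)"
  define bs where "bs = M / (D0 + M)"
  define b1 where "b1 = 1 - D0^2 / (4 * R^2)"
  have bs0: "0 < bs" and bs1: "bs < 1" using D0 M0 by (auto simp: bs_def)
  have fbs: "f bs = (D0 + M)^2"
  proof -
    have e: "1 - bs = D0 / (D0 + M)" using D0 M0 by (simp add: bs_def field_simps)
    have "D0^2 / (D0 / (D0 + M)) = D0 * (D0 + M)" using D0 M0 by (simp add: power2_eq_square field_simps)
    then have "D0^2 / (1 - bs) = D0 * (D0 + M)" unfolding e .
    moreover have "M^2 / bs = M * (D0 + M)" using D0 M0 by (simp add: bs_def power2_eq_square field_simps)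
    ultimately show ?thesis by (simp add: f_def power2_eq_square algebra_simps)
  qed
  have DR: "D0 \<le> R" using le norm_ge_zero[of m] by linarith
  have b1lt: "b1 < 1" using D0 R0 by (simp add: b1_def)
  have q: "D0 / (4 * R) \<le> 1/4" using DR R0 by (simp add: field_simps)
  have "D0^2 / (4 * R^2) = (D0 / (4 * R)) * (D0 / R)" by (simp add: power2_eq_square)
  also have "\<dots> \<le> D0 / (4 * R)"
  proof -
    have "D0 / R \<le> 1" using DR R0 by simp
    moreover have "D0 / (4 * R) \<ge> 0" using D0 R0 by simp
    ultimately show ?thesis by (rule mult_left_le)
  qed
  also have "\<dots> \<le> D0 / (D0 + M)"
  proof -
    have "D0 + M \<le> 4 * R" using le R0 by (simp add: M_def)
    then show ?thesis using D0 M0 by (intro divide_left_mono) auto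
  qed
  also have "\<dots> = 1 - bs" using D0 M0 by (simp add: bs_def field_simps)
  finally have bsb1: "bs \<le> b1" by (simp add: b1_def)
  have fb1: "f b1 \<ge> R^2"
  proof -
    have "1 - b1 = D0^2 / (4 * R^2)" by (simp add: b1_def)
    then have "D0^2 / (1 - b1) = 4 * R^2" using D0 R0 by simp
    moreover have "M^2 / b1 \<ge> 0" using bs0 bsb1 by simp
    ultimately show ?thesis unfolding f_def using R0 by simp
  qed
  have fbsR: "f bs \<le> R^2" unfolding fbs using le D0 M0 by (intro power_mono) (auto simp: M_def)
  have cont: "continuous_on {bs..b1} f"
    unfolding f_def using bs0 b1lt by (intro continuous_intros) auto
  obtain b where b: "bs \<le> b" "b \<le> b1" "f b = R^2" using IVT'[of f bs "R^2" b1, OF fbsR fb1 bsb1 cont] by blast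
  have b0: "0 < b" and b1': "b < 1" using b bs0 b1lt by auto
  define \<beta> where "\<beta> = sqrt b"
  define s where "s = sqrt (1 - b)"
  define c where "c = m / complex_of_real \<beta>"
  have be0: "\<beta> > 0" using b0 by (simp add: \<beta>_def)
  have s0: "s > 0" using b1' by (simp add: s_def)
  have "\<beta>^2 + s^2 = 1" using b0 b1' by (simp add: \<beta>_def s_def)
  moreover have "complex_of_real \<beta> * c = m" using be0 by (simp add: c_def)
  moreover have "(D0 / s)^2 + (cmod c)^2 = R^2"
  proof -
    have "(D0 / s)^2 = D0^2 / (1 - b)" using b1' by (simp add: s_def power_divide)
    moreover have "(cmod c)^2 = M^2 / b" using be0 b0 by (simp add: c_def M_def norm_divide power_divide \<beta>_def)
    ultimately show ?thesis using b(3) by (simp add: f_def)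
  qed
  ultimately show ?thesis using be0 s0 by (intro exI[of _ \<beta>] exI[of _ s] exI[of _ c]) simp
qed

lemma kernel2:
  fixes a b c d :: complex
  assumes "a * d - b * c = 0"
  shows "\<exists>y1 y2. (y1 \<noteq> 0 \<or> y2 \<noteq> 0) \<and> a * y1 + b * y2 = 0 \<and> c * y1 + d * y2 = 0"
proof (cases "a = 0 \<and> b = 0")
  case True
  show ?thesis
  proof (cases "c = 0 \<and> d = 0")
    case True
    then show ?thesis using \<open>a = 0 \<and> b = 0\<close> by (intro exI[of _ 1] exI[of _ 0]) simp
  next
    case False
    then show ?thesis using \<open>a = 0 \<and> b = 0\<close> by (intro exI[of _ d] exI[of _ "-c"]) (auto simp: mult.commute)
  qed
next
  case False
  have "c * b + d * (- a) = -(a * d - b * c)" by (simp add: algebra_simps)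
  then show ?thesis using False assms by (intro exI[of _ b] exI[of _ "-a"]) (auto simp: mult.commute)
qed

lemma unit_id:
  fixes P :: real and a b c :: complex
  shows "(cmod (complex_of_real P * a + cnj c * b))^2 + (cmod (- (c * a) + complex_of_real P * b))^2
       = (P^2 + (cmod c)^2) * ((cmod a)^2 + (cmod b)^2)"
proof -
  have "complex_of_real ((cmod (complex_of_real P * a + cnj c * b))^2 + (cmod (- (c * a) + complex_of_real P * b))^2)
      = complex_of_real ((P^2 + (cmod c)^2) * ((cmod a)^2 + (cmod b)^2))"
    apply (simp only: of_real_add of_real_mult complex_norm_square cnj_simps complex_cnj_minus)
    apply (simp only: of_real_power)
    by algebra
  then show ?thesis using of_real_eq_iff by blast
qed

lemma swap_id:
  fixes \<beta> :: real and y g :: complex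
  shows "(cmod (y + complex_of_real \<beta> * g))^2 - (cmod (g + complex_of_real \<beta> * y))^2
       = (1 - \<beta>^2) * ((cmod y)^2 - (cmod g)^2)"
proof -
  have "complex_of_real ((cmod (y + complex_of_real \<beta> * g))^2 - (cmod (g + complex_of_real \<beta> * y))^2)
      = complex_of_real ((1 - \<beta>^2) * ((cmod y)^2 - (cmod g)^2))"
    apply (simp only: of_real_add of_real_diff of_real_1 of_real_mult complex_norm_square cnj_simps)
    apply (simp only: of_real_power)
    by algebra
  then show ?thesis using of_real_eq_iff by blast
qed


lemma inE_00: "cmod p < 1 \<Longrightarrow> inE 0 0 p"
  unfolding inE_def by (simp add: power_less_one_iff)

lemma NV_core:
  fixes x1 x2 l0 lam z w c m gc L :: complex and \<beta> s p D0 R :: real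
  assumes x1: "x1 \<noteq> 0" and dom: "cmod x2 \<le> cmod x1"
    and lam: "cmod lam < 1" and z: "cmod z \<le> 1" and w: "cmod w \<le> 1"
    and s0: "s > 0" and bs: "\<beta>^2 + s^2 = 1" and bc: "complex_of_real \<beta> * c = m"
    and sp: "s * p = D0" and pc: "p^2 + (cmod c)^2 = R^2"
    and L: "L = l0 * gc * x1" and Lnorm: "cmod L = R * cmod x1" and R0: "R > 0"
    and RR: "complex_of_real (R^2) = l0 * cnj l0 * gc * cnj gc"
  shows "L + lam * x2 * cnj m - lam * complex_of_real D0 * x1 * z - lam * complex_of_real D0 * x2 * w
          + lam * (x1 * m + lam * cnj l0 * x2 * cnj gc) * z * w \<noteq> 0"
proof
  assume Q: "L + lam * x2 * cnj m - lam * complex_of_real D0 * x1 * z - lam * complex_of_real D0 * x2 * w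
          + lam * (x1 * m + lam * cnj l0 * x2 * cnj gc) * z * w = 0"
  define S where "S = complex_of_real s"
  define B where "B = complex_of_real \<beta>"
  define P where "P = complex_of_real p"
  define N11 where "N11 = z * lam * x1 * P - S * L"
  define N12 where "N12 = z * lam * x2 * cnj c + z * B * L"
  define N21 where "N21 = - (S * w * lam * x1 * c) - B * lam * x1 * P"
  define N22 where "N22 = S * w * lam * x2 * P - L - B * lam * x2 * cnj c"
  have h1: "S * P = complex_of_real D0" using sp by (simp add: S_def P_def of_real_mult[symmetric])
  have h2: "B * c = m" using bc by (simp add: B_def)
  have h3: "B * cnj c = cnj m" using bc by (metis B_def complex_cnj_complex_of_real complex_cnj_mult)
  have h4: "B * B + S * S = 1"
  proof -
    have "complex_of_real (\<beta>^2 + s^2) = 1" using bs by simp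
    then show ?thesis by (simp add: B_def S_def power2_eq_square)
  qed
  have h5: "P * P + c * cnj c = complex_of_real (R^2)"
  proof -
    have "complex_of_real (p^2 + (cmod c)^2) = complex_of_real (R^2)" using pc by simp
    then show ?thesis by (simp add: P_def complex_norm_square[symmetric] power2_eq_square)
  qed
  have raw: "N11 * N22 - N12 * N21 = S * (z * w * lam^2 * x1 * x2 * (P * P + c * cnj c))
      - z * lam * x1 * P * L * (1 - B * B) - S * S * w * L * lam * x2 * P + S * L * L
      + S * L * lam * x2 * (B * cnj c) + S * z * w * L * lam * x1 * (B * c)"
    unfolding N11_def N12_def N21_def N22_def by algebra
  have h4': "1 - B * B = S * S" using h4 by (simp add: algebra_simps)
  have det: "N11 * N22 - N12 * N21 = S * L *
     (L + lam * x2 * cnj m - lam * complex_of_real D0 * x1 * z - lam * complex_of_real D0 * x2 * w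
          + lam * (x1 * m + lam * cnj l0 * x2 * cnj gc) * z * w)"
    unfolding raw h5 RR h4' h2 h3 h1[symmetric] L by algebra
  then have "N11 * N22 - N12 * N21 = 0" using Q by simp
  then obtain y1 y2 where y: "y1 \<noteq> 0 \<or> y2 \<noteq> 0" and r1: "N11 * y1 + N12 * y2 = 0" and r2: "N21 * y1 + N22 * y2 = 0"
    using kernel2 by blast
  define G1 where "G1 = lam * (complex_of_real p * (x1 * y1) + cnj c * (x2 * y2))"
  define G2 where "G2 = lam * (- (c * (x1 * y1)) + complex_of_real p * (x2 * y2))"
  have e1: "S * (L * y1) = z * (G1 + B * (L * y2))"
  proof -
    have "N11 * y1 + N12 * y2 = z * (G1 + B * (L * y2)) - S * (L * y1)"
      unfolding N11_def N12_def G1_def P_def by algebra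
    then show ?thesis using r1 by simp
  qed
  have e2: "L * y2 + B * G1 = S * w * G2"
  proof -
    have "N21 * y1 + N22 * y2 = S * w * G2 - B * G1 - L * y2"
      unfolding N21_def N22_def G1_def G2_def P_def by algebra
    then show ?thesis using r2 by (simp add: algebra_simps)
  qed
  have n1: "s * cmod (L * y1) \<le> cmod (G1 + B * (L * y2))"
  proof -
    have "s * cmod (L * y1) = cmod z * cmod (G1 + B * (L * y2))"
      using e1 s0 by (metis S_def abs_of_pos norm_mult norm_of_real)
    also have "\<dots> \<le> cmod (G1 + B * (L * y2))" using z by (simp add: mult_left_le_one_le)
    finally show ?thesis .
  qed
  have n2: "cmod (L * y2 + B * G1) \<le> s * cmod G2"
  proof -
    have "cmod (L * y2 + B * G1) = s * cmod w * cmod G2"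
      using e2 s0 by (simp add: S_def norm_mult)
    also have "\<dots> \<le> s * cmod G2" using w s0 by (simp add: mult_left_le_one_le mult.assoc mult_left_le)
    finally show ?thesis .
  qed
  have sq1: "s^2 * (cmod (L * y1))^2 \<le> (cmod (G1 + B * (L * y2)))^2"
  proof -
    have "(s * cmod (L * y1))^2 \<le> (cmod (G1 + B * (L * y2)))^2" using n1 s0 by (intro power_mono) auto
    then show ?thesis by (simp add: power_mult_distrib)
  qed
  have sq2: "(cmod (L * y2 + B * G1))^2 \<le> s^2 * (cmod G2)^2"
  proof -
    have "(cmod (L * y2 + B * G1))^2 \<le> (s * cmod G2)^2" using n2 by (intro power_mono) auto
    then show ?thesis by (simp add: power_mult_distrib)
  qed
  have sw: "(cmod (L * y2 + B * G1))^2 - (cmod (G1 + B * (L * y2)))^2 = s^2 * ((cmod (L * y2))^2 - (cmod G1)^2)"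
    using swap_id[of "L * y2" \<beta> G1] bs by (simp add: B_def)
  have A1: "s^2 * ((cmod (L * y1))^2 + (cmod (L * y2))^2) \<le> s^2 * ((cmod G1)^2 + (cmod G2)^2)"
    using sq1 sq2 sw by (simp add: algebra_simps)
  have s2: "s^2 > 0" using s0 by simp
  have A2': "(cmod (L * y1))^2 + (cmod (L * y2))^2 \<le> (cmod G1)^2 + (cmod G2)^2"
    using A1 s2 by (rule mult_left_le_imp_le)
  have "(cmod (L * y1))^2 + (cmod (L * y2))^2 = (cmod L)^2 * ((cmod y1)^2 + (cmod y2)^2)"
    by (simp add: norm_mult power_mult_distrib algebra_simps)
  then have A2: "(cmod L)^2 * ((cmod y1)^2 + (cmod y2)^2) \<le> (cmod G1)^2 + (cmod G2)^2"
    using A2' by simp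
  have U: "(cmod G1)^2 + (cmod G2)^2 = (cmod lam)^2 * (R^2 * ((cmod x1)^2 * (cmod y1)^2 + (cmod x2)^2 * (cmod y2)^2))"
  proof -
    have "(cmod G1)^2 + (cmod G2)^2 = (cmod lam)^2 * ((cmod (complex_of_real p * (x1 * y1) + cnj c * (x2 * y2)))^2
        + (cmod (- (c * (x1 * y1)) + complex_of_real p * (x2 * y2)))^2)"
      unfolding G1_def G2_def norm_mult power_mult_distrib by (rule distrib_left[symmetric])
    also have "\<dots> = (cmod lam)^2 * ((p^2 + (cmod c)^2) * ((cmod (x1 * y1))^2 + (cmod (x2 * y2))^2))"
      by (simp only: unit_id)
    finally show ?thesis using pc by (simp add: norm_mult power_mult_distrib)
  qed
  have x22: "(cmod x2)^2 \<le> (cmod x1)^2" using dom by (intro power_mono) auto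
  have "(cmod x2)^2 * (cmod y2)^2 \<le> (cmod x1)^2 * (cmod y2)^2" using x22 by (intro mult_right_mono) auto
  then have "R^2 * ((cmod x1)^2 * (cmod y1)^2 + (cmod x2)^2 * (cmod y2)^2) \<le> R^2 * ((cmod x1)^2 * ((cmod y1)^2 + (cmod y2)^2))"
    by (intro mult_left_mono) (auto simp: algebra_simps)
  also have "\<dots> = (cmod L)^2 * ((cmod y1)^2 + (cmod y2)^2)" using Lnorm by (simp add: power_mult_distrib)
  finally have A3: "(cmod G1)^2 + (cmod G2)^2 \<le> (cmod lam)^2 * ((cmod L)^2 * ((cmod y1)^2 + (cmod y2)^2))"
    unfolding U by (intro mult_left_mono) auto
  define Y where "Y = (cmod L)^2 * ((cmod y1)^2 + (cmod y2)^2)"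
  have Y0: "Y > 0"
  proof -
    have "cmod L > 0" using Lnorm R0 x1 by simp
    moreover have "(cmod y1)^2 + (cmod y2)^2 > 0" using y by (auto simp: add_pos_nonneg add_nonneg_pos)
    ultimately show ?thesis by (simp add: Y_def)
  qed
  have "Y \<le> (cmod lam)^2 * Y" using A2 A3 by (simp add: Y_def)
  moreover have "(cmod lam)^2 < 1" using lam by (simp add: power_less_one_iff)
  ultimately show False using Y0 by (simp add: mult_le_cancel_right1)
qed


lemma construct:
  assumes E: "inE x1 x2 x3" and dom: "cmod x2 \<le> cmod x1" and l0: "l0 \<noteq> 0" and l1: "cmod l0 < 1"
    and K: "KK x1 x2 x3 \<le> cmod l0"
  shows "\<exists>f1 f2 f3. f1 holomorphic_on ball 0 1 \<and> f2 holomorphic_on ball 0 1 \<and> f3 holomorphic_on ball 0 1 \<and>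
     f1 0 = 0 \<and> f2 0 = 0 \<and> f3 0 = 0 \<and> f1 l0 = x1 \<and> f2 l0 = x2 \<and> f3 l0 = x3 \<and>
     (\<forall>lam\<in>ball 0 1. inE (f1 lam) (f2 lam) (f3 lam))"
proof -
  have h2: "cmod x2 < 1" by (rule inE_x2[OF E])
  have x3l: "cmod x3 < 1" by (rule inE_x3[OF E])
  define r where "r = cmod l0"
  have r0: "r > 0" using l0 by (simp add: r_def)
  have r1: "r < 1" using l1 by (simp add: r_def)
  show ?thesis
  proof (cases "x1 = 0")
    case True
    then have x2: "x2 = 0" using dom by simp
    have "cmod x3 \<le> KK x1 x2 x3" by (rule x3_le[OF h2])
    then have x3K: "cmod x3 \<le> r" using K by (simp add: r_def)
    define f3 where "f3 = (\<lambda>lam. lam * x3 / l0)"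
    have "(\<lambda>_. 0::complex) holomorphic_on ball 0 1" by simp
    moreover have "f3 holomorphic_on ball 0 1" unfolding f3_def by (intro holomorphic_intros) (use l0 in auto)
    moreover have "f3 l0 = x3" using l0 by (simp add: f3_def)
    moreover have "\<forall>lam\<in>ball 0 1. inE 0 0 (f3 lam)"
    proof
      fix lam :: complex assume "lam \<in> ball 0 1"
      then have lm: "cmod lam < 1" by simp
      have "cmod (f3 lam) = cmod lam * (cmod x3 / r)" by (simp add: f3_def norm_mult norm_divide r_def)
      also have "\<dots> \<le> cmod lam"
      proof -
        have "cmod x3 / r \<le> 1" using x3K r0 by simp
        then show ?thesis by (rule mult_left_le) simp
      qed
      finally show "inE 0 0 (f3 lam)" using lm by (intro inE_00) simp
    qed
    ultimately show ?thesis using True x2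
      by (intro exI[of _ "\<lambda>_. 0"] exI[of _ "\<lambda>_. 0"] exI[of _ f3]) (simp add: f3_def)
  next
    case False
    then have x10: "cmod x1 > 0" by simp
    define gc where "gc = cnj x1 - x2 * cnj x3"
    have cgc: "cnj gc = x1 - cnj x2 * x3" by (simp add: gc_def)
    have ngc: "cmod gc = cmod (x1 - cnj x2 * x3)" by (metis cgc complex_mod_cnj)
    have g0: "cmod gc > 0"
    proof (rule ccontr)
      assume "\<not> cmod gc > 0"
      then have "x1 - cnj x2 * x3 = 0" using ngc by simp
      then have "cmod x1 = cmod x2 * cmod x3" by (simp add: norm_mult)
      also have "\<dots> \<le> cmod x1 * cmod x3" using dom by (simp add: mult_right_mono)
      finally have "cmod x1 * (1 - cmod x3) \<le> 0" by (simp add: algebra_simps)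
      moreover have "cmod x1 * (1 - cmod x3) > 0" using x10 x3l by simp
      ultimately show False by simp
    qed
    define D0 where "D0 = (cmod x1)^2 - r^2 * (cmod x2)^2"
    have D0p: "D0 > 0"
    proof -
      have "(cmod x2)^2 \<le> (cmod x1)^2" using dom by (intro power_mono) auto
      moreover have "r^2 < 1" using r0 r1 by (simp add: power_less_one_iff)
      moreover have "(cmod x1)^2 > 0" using x10 by simp
      ultimately have "r^2 * (cmod x2)^2 < (cmod x1)^2"
      proof -
        assume a: "(cmod x2)^2 \<le> (cmod x1)^2" and b: "r^2 < 1" and c: "(cmod x1)^2 > 0"
        have "r^2 * (cmod x2)^2 \<le> r^2 * (cmod x1)^2" using a by (intro mult_left_mono) auto
        also have "\<dots> < 1 * (cmod x1)^2" using b c by (intro mult_strict_right_mono) auto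
        finally show ?thesis by simp
      qed
      then show ?thesis by (simp add: D0_def)
    qed
    define m where "m = cnj x1 * x3 - complex_of_real (r^2) * x2"
    define R where "R = r * cmod gc"
    have R0: "R > 0" using r0 g0 by (simp add: R_def)
    have cc: "D0 + cmod m \<le> R"
      using constr_cond[OF h2 dom r0 r1] K ngc by (simp add: D0_def m_def R_def r_def)
    obtain \<beta> s c where bsc: "0 \<le> \<beta>" "0 < s" "\<beta>^2 + s^2 = 1" "complex_of_real \<beta> * c = m"
        "(D0 / s)^2 + (cmod c)^2 = R^2"
      using choose_beta[OF D0p R0 cc] by blast
    define p where "p = D0 / s"
    have sp: "s * p = D0" using bsc(2) by (simp add: p_def)
    have pc: "p^2 + (cmod c)^2 = R^2" using bsc(5) by (simp add: p_def)
    define L where "L = l0 * gc * x1"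
    have Lnorm: "cmod L = R * cmod x1" by (simp add: L_def R_def r_def norm_mult)
    have RR: "complex_of_real (R^2) = l0 * cnj l0 * gc * cnj gc"
    proof -
      have "complex_of_real (R^2) = complex_of_real ((cmod l0)^2) * complex_of_real ((cmod gc)^2)"
        by (simp add: R_def r_def power_mult_distrib)
      then show ?thesis by (simp only: complex_norm_square mult.assoc)
    qed
    have r2c: "complex_of_real (r^2) = l0 * cnj l0" unfolding r_def by (rule complex_norm_square)
    define den where "den = (\<lambda>lam. L + lam * x2 * cnj m)"
    have mR: "cmod m < R" using cc D0p by simp
    have dnz: "den lam \<noteq> 0" if "cmod lam \<le> 1" for lam
    proof
      assume "den lam = 0"
      then have "L = - (lam * x2 * cnj m)" by (simp add: den_def add_eq_0_iff)
      then have "cmod L = cmod lam * cmod x2 * cmod m" by (simp add: norm_mult)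
      also have "\<dots> \<le> cmod x2 * cmod m" using that by (simp add: mult_left_le_one_le mult.assoc)
      also have "\<dots> \<le> cmod x1 * cmod m" using dom by (simp add: mult_right_mono)
      also have "\<dots> < cmod x1 * R" using mR x10 by simp
      finally show False using Lnorm by (simp add: mult.commute)
    qed
    define f1 where "f1 = (\<lambda>lam. lam * complex_of_real D0 * x1 / den lam)"
    define f2 where "f2 = (\<lambda>lam. lam * complex_of_real D0 * x2 / den lam)"
    define f3 where "f3 = (\<lambda>lam. lam * (x1 * m + lam * cnj l0 * x2 * cnj gc) / den lam)"
    have dnzb: "\<And>lam. lam \<in> ball 0 1 \<Longrightarrow> den lam \<noteq> 0" using dnz by simp
    have hd: "den holomorphic_on ball 0 1" unfolding den_def by (intro holomorphic_intros)
    have hol1: "f1 holomorphic_on ball 0 1" unfolding f1_def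
      by (intro holomorphic_on_divide hd dnzb holomorphic_intros)
    have hol2: "f2 holomorphic_on ball 0 1" unfolding f2_def
      by (intro holomorphic_on_divide hd dnzb holomorphic_intros)
    have hol3: "f3 holomorphic_on ball 0 1" unfolding f3_def
      by (intro holomorphic_on_divide hd dnzb holomorphic_intros)
    have d0: "den 0 \<noteq> 0" using dnz[of 0] by simp
    have z1: "f1 0 = 0" "f2 0 = 0" "f3 0 = 0" by (simp_all add: f1_def f2_def f3_def)
    have cm: "cnj m = x1 * cnj x3 - complex_of_real (r^2) * cnj x2" by (simp add: m_def)
    have denl0: "den l0 = l0 * complex_of_real D0"
    proof -
      have "den l0 = l0 * (gc * x1 + x2 * cnj m)" by (simp add: den_def L_def algebra_simps)
      also have "gc * x1 + x2 * cnj m = x1 * cnj x1 - complex_of_real (r^2) * (x2 * cnj x2)"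
        unfolding gc_def cm by algebra
      also have "\<dots> = complex_of_real D0"
        by (simp add: D0_def complex_norm_square[symmetric])
      finally show ?thesis .
    qed
    have Dnz: "complex_of_real D0 \<noteq> 0" using D0p by simp
    have v1: "f1 l0 = x1" "f2 l0 = x2" using l0 Dnz by (simp_all add: f1_def f2_def denl0)
    have v3: "f3 l0 = x3"
    proof -
      have "x1 * m + l0 * cnj l0 * x2 * cnj gc = x1 * m + complex_of_real (r^2) * x2 * cnj gc"
        by (simp only: r2c)
      also have "\<dots> = (x1 * cnj x1 - complex_of_real (r^2) * (x2 * cnj x2)) * x3"
        unfolding m_def cgc by algebra
      also have "\<dots> = complex_of_real D0 * x3"
        by (simp add: D0_def complex_norm_square[symmetric])
      finally have e: "x1 * m + l0 * cnj l0 * x2 * cnj gc = complex_of_real D0 * x3" .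
      show ?thesis using l0 Dnz by (simp add: f3_def denl0 e)
    qed
    have memb: "\<forall>lam\<in>ball 0 1. inE (f1 lam) (f2 lam) (f3 lam)"
    proof
      fix lam :: complex assume "lam \<in> ball 0 1"
      then have lm: "cmod lam < 1" by simp
      have dl: "den lam \<noteq> 0" using dnz lm by simp
      have "NV (f1 lam) (f2 lam) (f3 lam)" unfolding NV_def
      proof (intro allI impI)
        fix z w :: complex assume z: "cmod z \<le> 1" and w: "cmod w \<le> 1"
        have core: "L + lam * x2 * cnj m - lam * complex_of_real D0 * x1 * z - lam * complex_of_real D0 * x2 * w
          + lam * (x1 * m + lam * cnj l0 * x2 * cnj gc) * z * w \<noteq> 0"
          by (rule NV_core[OF False dom lm z w bsc(2) bsc(3) bsc(4) sp pc L_def Lnorm R0 RR])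
        have a1: "f1 lam * den lam = lam * complex_of_real D0 * x1" using dl by (simp add: f1_def)
        have a2: "f2 lam * den lam = lam * complex_of_real D0 * x2" using dl by (simp add: f2_def)
        have a3: "f3 lam * den lam = lam * (x1 * m + lam * cnj l0 * x2 * cnj gc)" using dl by (simp add: f3_def)
        have "(1 - f1 lam * z - f2 lam * w + f3 lam * z * w) * den lam =
           den lam - (f1 lam * den lam) * z - (f2 lam * den lam) * w + (f3 lam * den lam) * z * w"
          by (simp add: algebra_simps)
        also have "\<dots> = L + lam * x2 * cnj m - lam * complex_of_real D0 * x1 * z - lam * complex_of_real D0 * x2 * w
          + lam * (x1 * m + lam * cnj l0 * x2 * cnj gc) * z * w"
          unfolding a1 a2 a3 by (simp add: den_def)
        finally have "(1 - f1 lam * z - f2 lam * w + f3 lam * z * w) * den lam =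
          L + lam * x2 * cnj m - lam * complex_of_real D0 * x1 * z - lam * complex_of_real D0 * x2 * w
          + lam * (x1 * m + lam * cnj l0 * x2 * cnj gc) * z * w" .
        then show "1 - f1 lam * z - f2 lam * w + f3 lam * z * w \<noteq> 0" using core by auto
      qed
      then show "inE (f1 lam) (f2 lam) (f3 lam)" by (rule NV_inE)
    qed
    show ?thesis using hol1 hol2 hol3 z1 v1 v3 memb by blast
  qed
qed


lemma inE_mid: assumes "inE x1 x2 x3" shows "inE ((x1 + x2) / 2) ((x1 + x2) / 2) x3"
proof -
  define sm where "sm = (x1 + x2) / 2"
  have e: "sm - cnj sm * x3 = ((x1 - cnj x2 * x3) + (x2 - cnj x1 * x3)) / 2"
    by (simp add: sm_def field_simps)
  define A where "A = cmod (sm - cnj sm * x3)"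
  define G where "G = cmod (x1 - cnj x2 * x3)"
  define H where "H = cmod (x2 - cnj x1 * x3)"
  have "A \<le> (G + H) / 2"
    unfolding A_def G_def H_def e by (simp add: norm_divide norm_triangle_ineq)
  moreover have a: "cmod x3 < 1" and b: "G + H < 1 - (cmod x3)^2"
    using assms unfolding inE_def G_def H_def by auto
  ultimately have "A + A < 1 - (cmod x3)^2"
  proof -
    assume h1: "A \<le> (G + H) / 2" and h2: "cmod x3 < 1" and h3: "G + H < 1 - (cmod x3)^2"
    have "A + A \<le> G + H" using h1 by (simp add: field_simps)
    then show ?thesis using h3 by linarith
  qed
  then show ?thesis using a unfolding inE_def sm_def[symmetric] A_def by simp
qed

lemma bc_sym: "j \<le> n \<Longrightarrow> bc n (n - j) = bc n j"
  by (simp add: binomial_symmetric[symmetric])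

lemma tG_pair:
  assumes n2: "n \<ge> 2" and tg: "tG n p" and j: "j \<in> {1..n-1}"
  shows "inE (p j / bc n j) (p (n-j) / bc n j) (p n)"
  using tg tG_iff[OF n2] j by blast

lemma scaled_lt: assumes "j \<le> n" "cmod (x / bc n j) < 1" shows "cmod x < real (n choose j)"
proof -
  have C0: "real (n choose j) > 0" using assms(1) by simp
  have "cmod (x / bc n j) = cmod x / real (n choose j)" by (simp add: norm_divide)
  then show ?thesis using assms(2) C0 by (simp add: divide_less_eq)
qed

lemma Hinf_KK:
  assumes n2: "n \<ge> 2" and tg: "tG n p" and j: "j \<in> {1..n-1}"
  shows "Hinf_Phi n j p = KK (p j / bc n j) (p (n-j) / bc n j) (p n)"
proof -
  have E: "inE (p j / bc n j) (p (n-j) / bc n j) (p n)" by (rule tG_pair[OF n2 tg j])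
  have jn: "j \<le> n" using j by auto
  have "cmod (p (n - j)) < real (n choose j)" by (rule scaled_lt[OF jn inE_x2[OF E]])
  then show ?thesis by (rule Hinf_eq[OF jn])
qed

lemma Hinf_local:
  assumes "p j = p' j" "p (n - j) = p' (n - j)" "p n = p' n"
  shows "Hinf_Phi n j p = Hinf_Phi n j p'"
  unfolding Hinf_Phi_def Phi_def assms by (rule refl)

lemma schwarz_part:
  assumes n2: "n \<ge> 2" and l0: "l0 \<in> ball 0 1 - {0}"
    and hol: "\<forall>k\<in>{1..n}. (\<lambda>z. \<psi> z k) holomorphic_on ball 0 1"
    and inG: "\<forall>z\<in>ball 0 1. tG n (\<psi> z)"
    and z0: "\<forall>k\<in>{1..n}. \<psi> 0 k = 0"
    and yl: "\<forall>k\<in>{1..n}. \<psi> l0 k = y k"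
  shows "\<forall>j\<in>{1..n-1}. Hinf_Phi n j y \<le> cmod l0"
proof
  fix j assume j: "j \<in> {1..n-1}"
  have jn: "j \<le> n" and nj: "n - j \<in> {1..n}" and jj: "j \<in> {1..n}" and nn: "n \<in> {1..n}" using j n2 by auto
  let ?C = "bc n j"
  have Cr: "real (n choose j) > 0" using jn by simp
  have Cn: "?C \<noteq> 0" using Cr by simp
  have l0b: "cmod l0 < 1" "l0 \<noteq> 0" using l0 by auto
  have tgl: "tG n (\<psi> l0)" using inG l0 by auto
  have "Hinf_Phi n j y = Hinf_Phi n j (\<psi> l0)" using yl jj nj nn by (intro Hinf_local) auto
  also have "\<dots> = KK (\<psi> l0 j / ?C) (\<psi> l0 (n-j) / ?C) (\<psi> l0 n)" by (rule Hinf_KK[OF n2 tgl j])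
  finally have H: "Hinf_Phi n j y = KK (\<psi> l0 j / ?C) (\<psi> l0 (n-j) / ?C) (\<psi> l0 n)" .
  have E0: "inE (\<psi> l0 j / ?C) (\<psi> l0 (n-j) / ?C) (\<psi> l0 n)" by (rule tG_pair[OF n2 tgl j])
  have x2l: "cmod (\<psi> l0 (n-j) / ?C) < 1" by (rule inE_x2[OF E0])
  show "Hinf_Phi n j y \<le> cmod l0"
  proof (rule ccontr)
    assume "\<not> Hinf_Phi n j y \<le> cmod l0"
    then have "cmod l0 < KK (\<psi> l0 j / ?C) (\<psi> l0 (n-j) / ?C) (\<psi> l0 n)" using H by simp
    then obtain w where w: "cmod w < 1" "1 - \<psi> l0 (n-j) / ?C * w \<noteq> 0"
      "cmod l0 * cmod (1 - \<psi> l0 (n-j) / ?C * w) < cmod (\<psi> l0 j / ?C - \<psi> l0 n * w)"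
      using KK_approx[OF x2l] by blast
    define g where "g = (\<lambda>lam. (\<psi> lam j / ?C - \<psi> lam n * w) / (1 - \<psi> lam (n-j) / ?C * w))"
    have Elam: "inE (\<psi> lam j / ?C) (\<psi> lam (n-j) / ?C) (\<psi> lam n)" if "lam \<in> ball 0 1" for lam
      using tG_pair[OF n2 _ j] inG that by blast
    have dnz: "1 - \<psi> lam (n-j) / ?C * w \<noteq> 0" if "lam \<in> ball 0 1" for lam
      using one_minus_nz[OF inE_x2[OF Elam[OF that]]] w(1) by simp
    have hj: "(\<lambda>z. \<psi> z j) holomorphic_on ball 0 1" using hol jj by blast
    have hnj: "(\<lambda>z. \<psi> z (n-j)) holomorphic_on ball 0 1" using hol nj by blast
    have hn: "(\<lambda>z. \<psi> z n) holomorphic_on ball 0 1" using hol nn by blast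
    have hg: "g holomorphic_on ball 0 1" unfolding g_def
      by (intro holomorphic_on_divide dnz holomorphic_intros hj hnj hn) auto
    have g0: "g 0 = 0" using z0 jj nj nn by (simp add: g_def)
    have gb: "cmod (g lam) < 1" if "cmod lam < 1" for lam
    proof -
      have lb: "lam \<in> ball 0 1" using that by simp
      have "cmod (g lam) \<le> KK (\<psi> lam j / ?C) (\<psi> lam (n-j) / ?C) (\<psi> lam n)"
        unfolding g_def using Psi_le[OF inE_x2[OF Elam[OF lb]]] w(1) by simp
      also have "\<dots> < 1" by (rule inE_KK[OF Elam[OF lb]])
      finally show ?thesis .
    qed
    have "cmod (g l0) \<le> cmod l0" by (rule Schwarz_Lemma(1)[OF hg g0 gb l0b(1)])
    moreover have "cmod (g l0) > cmod l0"
    proof -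
      have p: "cmod (1 - \<psi> l0 (n-j) / ?C * w) > 0" using w(2) by simp
      have "cmod (g l0) = cmod (\<psi> l0 j / ?C - \<psi> l0 n * w) / cmod (1 - \<psi> l0 (n-j) / ?C * w)"
        by (simp add: g_def norm_divide)
      then show ?thesis using w(3) p by (simp add: pos_less_divide_eq)
    qed
    ultimately show False by simp
  qed
qed


lemma Jn_small: assumes n2: "n \<ge> 2" and n3: "n \<le> 3" and tg: "tG n y" shows "Jn n y"
proof -
  have "n = 2 \<or> n = 3" using n2 n3 by auto
  then show ?thesis
  proof
    assume n: "n = 2"
    show ?thesis unfolding Jn_def using tg n by (simp add: field_simps)
  next
    assume n: "n = 3"
    show ?thesis unfolding Jn_def using tg n by simp
  qed
qed

lemma Jn_facts:
  assumes J: "Jn n y"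
  shows "tG n y"
    and "\<And>j. 2 \<le> j \<Longrightarrow> 2 * j < n \<Longrightarrow> y j = bc n j / of_nat n * y 1 \<and> y (n - j) = bc n j / of_nat n * y (n - 1)"
    and "even n \<Longrightarrow> y (n div 2) = bc n (n div 2) / of_nat n * ((y 1 + y (n - 1)) / 2)"
proof -
  show "tG n y" using J by (simp add: Jn_def)
  show "y j = bc n j / of_nat n * y 1 \<and> y (n - j) = bc n j / of_nat n * y (n - 1)"
    if j2: "2 \<le> j" and jn: "2 * j < n" for j
  proof (cases "odd n")
    case True
    then have "j \<in> {2..n div 2}" using j2 jn by auto
    then show ?thesis using J True unfolding Jn_def by auto
  next
    case False
    then have "j \<in> {2..n div 2 - 1}" using j2 jn by auto
    then show ?thesis using J False unfolding Jn_def by auto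
  qed
  show "y (n div 2) = bc n (n div 2) / of_nat n * ((y 1 + y (n - 1)) / 2)" if "even n"
    using J that unfolding Jn_def by auto
qed

lemma construct_E:
  assumes E: "inE x1 x2 x3" and l0: "l0 \<noteq> 0" and l1: "cmod l0 < 1"
    and K1: "KK x1 x2 x3 \<le> cmod l0" and K2: "KK x2 x1 x3 \<le> cmod l0"
  shows "\<exists>f1 f2 f3. f1 holomorphic_on ball 0 1 \<and> f2 holomorphic_on ball 0 1 \<and> f3 holomorphic_on ball 0 1 \<and>
     f1 0 = 0 \<and> f2 0 = 0 \<and> f3 0 = 0 \<and> f1 l0 = x1 \<and> f2 l0 = x2 \<and> f3 l0 = x3 \<and>
     (\<forall>lam\<in>ball 0 1. inE (f1 lam) (f2 lam) (f3 lam))"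
proof (cases "cmod x2 \<le> cmod x1")
  case True
  then show ?thesis using construct[OF E True l0 l1 K1] by blast
next
  case False
  then have d: "cmod x1 \<le> cmod x2" by simp
  have E': "inE x2 x1 x3" using E inE_sym by blast
  obtain f1 f2 f3 where f: "f1 holomorphic_on ball 0 1" "f2 holomorphic_on ball 0 1" "f3 holomorphic_on ball 0 1"
     "f1 0 = 0" "f2 0 = 0" "f3 0 = 0" "f1 l0 = x2" "f2 l0 = x1" "f3 l0 = x3"
     "\<forall>lam\<in>ball 0 1. inE (f1 lam) (f2 lam) (f3 lam)"
    using construct[OF E' d l0 l1 K2] by blast
  have "\<forall>lam\<in>ball 0 1. inE (f2 lam) (f1 lam) (f3 lam)" using f(10) inE_sym by blast
  then show ?thesis using f by blast
qed

lemma construct_G: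
  assumes n2: "n \<ge> 2" and J: "Jn n y" and l0: "l0 \<in> ball 0 1 - {0}"
    and Hall: "\<forall>k\<in>{1..n-1}. Hinf_Phi n k y \<le> cmod l0"
  shows "\<exists>\<psi> :: complex \<Rightarrow> nat \<Rightarrow> complex.
        (\<forall>k\<in>{1..n}. (\<lambda>z. \<psi> z k) holomorphic_on ball 0 1) \<and>
        (\<forall>z\<in>ball 0 1. tG n (\<psi> z)) \<and>
        (\<forall>k\<in>{1..n}. \<psi> 0 k = 0) \<and>
        (\<forall>k\<in>{1..n}. \<psi> l0 k = y k)"
proof -
  note JF = Jn_facts[OF J]
  have tg: "tG n y" by (rule JF(1))
  have l0n: "l0 \<noteq> 0" and l0b: "cmod l0 < 1" using l0 by auto
  have one: "1 \<in> {1..n-1}" and n1: "n - 1 \<in> {1..n-1}" and nn1: "n - (n - 1) = 1" using n2 by auto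
  have bn1: "bc n (n - 1) = bc n 1" using bc_sym[of 1 n] n2 by simp
  have bn: "bc n 1 = of_nat n" by simp
  have nz: "(of_nat n :: complex) \<noteq> 0" using n2 by simp
  define x1 where "x1 = y 1 / bc n 1"
  define x2 where "x2 = y (n - 1) / bc n 1"
  define x3 where "x3 = y n"
  have E: "inE x1 x2 x3" using tG_pair[OF n2 tg one] by (simp add: x1_def x2_def x3_def)
  have K1: "KK x1 x2 x3 \<le> cmod l0"
  proof -
    have "Hinf_Phi n 1 y \<le> cmod l0" using Hall one by blast
    moreover have "Hinf_Phi n 1 y = KK x1 x2 x3"
      using Hinf_KK[OF n2 tg one] by (simp add: x1_def x2_def x3_def)
    ultimately show ?thesis by simp
  qed
  have K2: "KK x2 x1 x3 \<le> cmod l0"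
  proof -
    have "Hinf_Phi n (n - 1) y = KK (y (n-1) / bc n (n-1)) (y (n - (n-1)) / bc n (n-1)) (y n)"
      by (rule Hinf_KK[OF n2 tg n1])
    also have "\<dots> = KK x2 x1 x3" unfolding bn1 nn1 by (simp add: x1_def x2_def x3_def)
    moreover have "Hinf_Phi n (n - 1) y \<le> cmod l0" using Hall n1 by blast
    ultimately show ?thesis by simp
  qed
  obtain f1 f2 f3 where f: "f1 holomorphic_on ball 0 1" "f2 holomorphic_on ball 0 1" "f3 holomorphic_on ball 0 1"
     "f1 0 = 0" "f2 0 = 0" "f3 0 = 0" "f1 l0 = x1" "f2 l0 = x2" "f3 l0 = x3"
     "\<forall>lam\<in>ball 0 1. inE (f1 lam) (f2 lam) (f3 lam)"
    using construct_E[OF E l0n l0b K1 K2] by blast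
  define \<psi> where "\<psi> = (\<lambda>z k. if k = n then f3 z else if 2 * k < n then bc n k * f1 z
      else if n < 2 * k then bc n k * f2 z else bc n k * ((f1 z + f2 z) / 2))"
  have hol: "\<forall>k\<in>{1..n}. (\<lambda>z. \<psi> z k) holomorphic_on ball 0 1"
  proof
    fix k assume "k \<in> {1..n}"
    consider "k = n" | "k \<noteq> n" "2 * k < n" | "k \<noteq> n" "\<not> 2 * k < n" "n < 2 * k"
      | "k \<noteq> n" "\<not> 2 * k < n" "\<not> n < 2 * k" by blast
    then show "(\<lambda>z. \<psi> z k) holomorphic_on ball 0 1"
      by cases (simp_all add: \<psi>_def f(1-3) holomorphic_intros)
  qed
  have zero: "\<forall>k\<in>{1..n}. \<psi> 0 k = 0" using f(4-6) by (simp add: \<psi>_def)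
  have val: "\<forall>k\<in>{1..n}. \<psi> l0 k = y k"
  proof
    fix k assume k: "k \<in> {1..n}"
    show "\<psi> l0 k = y k"
    proof (cases "k = n")
      case True
      then show ?thesis using f(9) by (simp add: \<psi>_def x3_def)
    next
      case kn: False
      show ?thesis
      proof (cases "2 * k < n")
        case lt: True
        have "\<psi> l0 k = bc n k * (y 1 / of_nat n)" using kn lt f(7) by (simp add: \<psi>_def x1_def)
        also have "\<dots> = y k"
        proof (cases "k = 1")
          case True then show ?thesis using nz by simp
        next
          case False
          then have "2 \<le> k" using k by auto
          then show ?thesis using JF(2)[OF _ lt] by simp
        qed
        finally show ?thesis .
      next
        case nlt: False
        show ?thesis
        proof (cases "n < 2 * k")
          case gt: True
          define j where "j = n - k"
          have j1: "1 \<le> j" and jl: "2 * j < n" and kj: "k = n - j" using gt kn k by (auto simp: j_def)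
          have bj: "bc n k = bc n j" unfolding kj by (rule bc_sym) (simp add: j_def)
          have "\<psi> l0 k = bc n k * (y (n - 1) / of_nat n)" using kn nlt gt f(8) by (simp add: \<psi>_def x2_def)
          also have "\<dots> = y k"
          proof (cases "j = 1")
            case True
            then have "k = n - 1" using kj by simp
            then show ?thesis using nz bn1 by simp
          next
            case False
            then have "2 \<le> j" using j1 by simp
            then have "y (n - j) = bc n j / of_nat n * y (n - 1)" using JF(2)[OF _ jl] by simp
            then have "y k = bc n j / of_nat n * y (n - 1)" using kj by simp
            then show ?thesis using bj by simp
          qed
          finally show ?thesis .
        next
          case ngt: False
          then have ev: "even n" and kd: "k = n div 2" using nlt by auto
          have "\<psi> l0 k = bc n k * ((x1 + x2) / 2)" using kn nlt ngt f(7,8) by (simp add: \<psi>_def)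
          also have "\<dots> = bc n k / of_nat n * ((y 1 + y (n - 1)) / 2)"
            using nz by (simp add: x1_def x2_def field_simps)
          also have "\<dots> = y k" using JF(3)[OF ev] kd by simp
          finally show ?thesis .
        qed
      qed
    qed
  qed
  have memb: "\<forall>z\<in>ball 0 1. tG n (\<psi> z)"
  proof
    fix z :: complex assume z: "z \<in> ball 0 1"
    have Ez: "inE (f1 z) (f2 z) (f3 z)" using f(10) z by blast
    show "tG n (\<psi> z)" unfolding tG_iff[OF n2]
    proof
      fix k assume k: "k \<in> {1..n-1}"
      have kn: "k \<noteq> n" "n - k \<noteq> n" "k \<le> n" using k by auto
      have bk: "bc n k \<noteq> 0" using kn(3) by simp
      have bs: "bc n (n - k) = bc n k" using kn(3) by (rule bc_sym)
      have nk: "n - (n - k) = k" using kn(3) by simp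
      consider "2 * k < n" | "n < 2 * k" | "2 * k = n" by linarith
      then show "inE (\<psi> z k / bc n k) (\<psi> z (n - k) / bc n k) (\<psi> z n)"
      proof cases
        case 1
        then have "n < 2 * (n - k)" by auto
        then show ?thesis using 1 kn bk Ez unfolding \<psi>_def bs by simp
      next
        case 2
        then have "2 * (n - k) < n" using kn(3) by arith
        then have "inE (f2 z) (f1 z) (f3 z)" using Ez inE_sym by blast
        then show ?thesis using 2 \<open>2 * (n - k) < n\<close> kn bk unfolding \<psi>_def bs by simp
      next
        case 3
        then have "n - k = k" by auto
        then show ?thesis using 3 kn bk inE_mid[OF Ez] unfolding \<psi>_def by simp
      qed
    qed
  qed
  show ?thesis using hol memb zero val by blast
qed


lemma onat: "(of_nat N :: complex) = complex_of_real (real N)" by simp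

lemma T4:
  fixes a b q :: complex and N :: nat
  assumes N0: "N > 0" and bl: "cmod b < real N"
  shows "(real N * cmod (a - cnj b * q) + cmod (a * b - (of_nat N)^2 * q)) / ((real N)^2 - (cmod b)^2)
       = KK (a / of_nat N) (b / of_nat N) q"
proof -
  define C where "C = real N"
  have C0: "C > 0" using N0 by (simp add: C_def)
  have oc: "(of_nat N :: complex) = complex_of_real C" by (simp add: C_def)
  have e1: "cmod (a / of_nat N - cnj (b / of_nat N) * q) = cmod (a - cnj b * q) / C"
  proof -
    have "a / of_nat N - cnj (b / of_nat N) * q = (a - cnj b * q) / complex_of_real C"
      unfolding oc by (simp add: diff_divide_distrib)
    then show ?thesis using C0 by (simp add: norm_divide)
  qed
  have e2: "cmod (a / of_nat N * (b / of_nat N) - q) = cmod (a * b - (complex_of_real C)^2 * q) / C^2"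
  proof -
    have "a / of_nat N * (b / of_nat N) - q = (a * b - (complex_of_real C)^2 * q) / (complex_of_real C)^2"
      unfolding oc using C0 by (simp add: field_simps power2_eq_square)
    then show ?thesis using C0 by (simp add: norm_divide norm_power)
  qed
  have e3: "1 - (cmod (b / of_nat N))^2 = (C^2 - (cmod b)^2) / C^2"
    unfolding oc using C0 by (simp add: norm_divide power_divide field_simps)
  have bl': "(cmod b)^2 < C^2" using bl by (simp add: C_def power_strict_mono)
  have pos: "C^2 - (cmod b)^2 > 0" using bl' by simp
  have "KK (a / of_nat N) (b / of_nat N) q = (cmod (a - cnj b * q) / C + cmod (a * b - (complex_of_real C)^2 * q) / C^2) / ((C^2 - (cmod b)^2) / C^2)"
    unfolding KK_def e1 e2 e3 by simp
  also have "\<dots> = (C * cmod (a - cnj b * q) + cmod (a * b - (complex_of_real C)^2 * q)) / (C^2 - (cmod b)^2)"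
    using C0 pos by (simp add: field_simps power2_eq_square)
  finally show ?thesis unfolding oc C_def by simp
qed

lemma T5:
  fixes a b q l0 :: complex and N :: nat
  assumes N0: "N > 0"
  shows "(\<forall>z\<in>ball 0 1. \<forall>w\<in>ball 0 1. of_nat N * l0 - a * z - b * l0 * w + of_nat N * q * z * w \<noteq> 0)
     \<longleftrightarrow> (\<forall>z\<in>ball 0 1. \<forall>w\<in>ball 0 1. l0 - a / of_nat N * z - b / of_nat N * l0 * w + q * z * w \<noteq> 0)"
proof -
  have nz: "(of_nat N :: complex) \<noteq> 0" using N0 by simp
  have "of_nat N * l0 - a * z - b * l0 * w + of_nat N * q * z * w
     = of_nat N * (l0 - a / of_nat N * z - b / of_nat N * l0 * w + q * z * w)" for z w
    using nz by (simp add: field_simps)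
  then show ?thesis using nz by simp
qed

lemma T6:
  fixes a b q :: complex and N :: nat and r :: real
  assumes N0: "N > 0"
  shows "(cmod a)^2 + r^2 * (cmod b)^2 - (real N)^2 * (cmod q)^2 + 2 * r * cmod (a * b - (of_nat N)^2 * q) \<le> (real N)^2 * r^2
    \<longleftrightarrow> (cmod (a / of_nat N))^2 + r^2 * (cmod (b / of_nat N))^2 - (cmod q)^2 + 2 * r * cmod (a / of_nat N * (b / of_nat N) - q) \<le> r^2"
proof -
  define C where "C = real N"
  have C0: "C > 0" using N0 by (simp add: C_def)
  have oc: "(of_nat N :: complex) = complex_of_real C" by (simp add: C_def)
  have e2: "cmod (a / of_nat N * (b / of_nat N) - q) = cmod (a * b - (of_nat N)^2 * q) / C^2"
  proof -
    have "a / of_nat N * (b / of_nat N) - q = (a * b - (of_nat N)^2 * q) / (complex_of_real C)^2"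
      unfolding oc using C0 by (simp add: field_simps power2_eq_square)
    then show ?thesis using C0 by (simp add: norm_divide norm_power)
  qed
  have e3: "(cmod (a / of_nat N))^2 = (cmod a)^2 / C^2" "(cmod (b / of_nat N))^2 = (cmod b)^2 / C^2"
    unfolding oc using C0 by (simp_all add: norm_divide power_divide)
  have C2: "C^2 > 0" using C0 by simp
  have "(cmod (a / of_nat N))^2 + r^2 * (cmod (b / of_nat N))^2 - (cmod q)^2 + 2 * r * cmod (a / of_nat N * (b / of_nat N) - q)
     = ((cmod a)^2 + r^2 * (cmod b)^2 - C^2 * (cmod q)^2 + 2 * r * cmod (a * b - (of_nat N)^2 * q)) / C^2"
    unfolding e2 e3 using C2 by (simp add: field_simps)
  then show ?thesis using C2 unfolding C_def[symmetric] by (simp add: divide_le_eq mult.commute)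
qed

lemma T7:
  fixes a b q :: complex and N :: nat and r :: real
  assumes N0: "N > 0"
  shows "cmod (complex_of_real (r^2) * b - cnj a * q) + r * cmod (a - cnj b * q) + real N * (cmod q)^2 \<le> real N * r^2
    \<longleftrightarrow> cmod (complex_of_real (r^2) * (b / of_nat N) - cnj (a / of_nat N) * q) + r * cmod (a / of_nat N - cnj (b / of_nat N) * q) + (cmod q)^2 \<le> r^2"
proof -
  define C where "C = real N"
  have C0: "C > 0" using N0 by (simp add: C_def)
  have oc: "(of_nat N :: complex) = complex_of_real C" by (simp add: C_def)
  have e1: "cmod (complex_of_real (r^2) * (b / of_nat N) - cnj (a / of_nat N) * q) = cmod (complex_of_real (r^2) * b - cnj a * q) / C"
  proof -
    have "complex_of_real (r^2) * (b / of_nat N) - cnj (a / of_nat N) * q = (complex_of_real (r^2) * b - cnj a * q) / complex_of_real C"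
      unfolding oc by (simp add: diff_divide_distrib)
    then show ?thesis using C0 by (simp add: norm_divide)
  qed
  have e2: "cmod (a / of_nat N - cnj (b / of_nat N) * q) = cmod (a - cnj b * q) / C"
  proof -
    have "a / of_nat N - cnj (b / of_nat N) * q = (a - cnj b * q) / complex_of_real C"
      unfolding oc by (simp add: diff_divide_distrib)
    then show ?thesis using C0 by (simp add: norm_divide)
  qed
  have "cmod (complex_of_real (r^2) * (b / of_nat N) - cnj (a / of_nat N) * q) + r * cmod (a / of_nat N - cnj (b / of_nat N) * q) + (cmod q)^2
     = (cmod (complex_of_real (r^2) * b - cnj a * q) + r * cmod (a - cnj b * q) + C * (cmod q)^2) / C"
    unfolding e1 e2 using C0 by (simp add: field_simps)
  then show ?thesis using C0 unfolding C_def[symmetric] by (simp add: divide_le_eq mult.commute)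
qed


lemma perj:
  fixes a b q l0 :: complex and N :: nat and H1 H2 :: real
  assumes N0: "N > 0" and E1: "inE (a / of_nat N) (b / of_nat N) q"
    and H1: "H1 = KK (a / of_nat N) (b / of_nat N) q" and H2: "H2 = KK (b / of_nat N) (a / of_nat N) q"
    and l0: "l0 \<noteq> 0" "cmod l0 < 1"
  defines "M \<equiv> H1 \<le> cmod l0 \<and> H2 \<le> cmod l0"
  shows "((cmod b \<le> cmod a \<longrightarrow> H1 \<le> cmod l0) \<and> (cmod a \<le> cmod b \<longrightarrow> H2 \<le> cmod l0)) \<longleftrightarrow> M"
    and "((cmod b \<le> cmod a \<longrightarrow>
              (real N * cmod (a - cnj b * q) + cmod (a * b - (of_nat N)\<^sup>2 * q))
               / ((real N)\<^sup>2 - (cmod b)\<^sup>2) \<le> cmod l0) \<and>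
           (cmod a \<le> cmod b \<longrightarrow>
              (real N * cmod (b - cnj a * q) + cmod (a * b - (of_nat N)\<^sup>2 * q))
               / ((real N)\<^sup>2 - (cmod a)\<^sup>2) \<le> cmod l0)) \<longleftrightarrow> M"
    and "((cmod b \<le> cmod a \<longrightarrow>
              (\<forall>z\<in>ball 0 1. \<forall>w\<in>ball 0 1.
                 of_nat N * l0 - a * z - b * l0 * w + of_nat N * q * z * w \<noteq> 0)) \<and>
           (cmod a \<le> cmod b \<longrightarrow>
              (\<forall>z\<in>ball 0 1. \<forall>w\<in>ball 0 1.
                 of_nat N * l0 - b * z - a * l0 * w + of_nat N * q * z * w \<noteq> 0))) \<longleftrightarrow> M"
    and "cmod q \<le> cmod l0 \<Longrightarrow> ((cmod b \<le> cmod a \<longrightarrow>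
              (cmod a)\<^sup>2 + (cmod l0)\<^sup>2 * (cmod b)\<^sup>2 - (real N)\<^sup>2 * (cmod q)\<^sup>2
                + 2 * cmod l0 * cmod (a * b - (of_nat N)\<^sup>2 * q)
              \<le> (real N)\<^sup>2 * (cmod l0)\<^sup>2) \<and>
           (cmod a \<le> cmod b \<longrightarrow>
              (cmod b)\<^sup>2 + (cmod l0)\<^sup>2 * (cmod a)\<^sup>2 - (real N)\<^sup>2 * (cmod q)\<^sup>2
                + 2 * cmod l0 * cmod (a * b - (of_nat N)\<^sup>2 * q)
              \<le> (real N)\<^sup>2 * (cmod l0)\<^sup>2)) \<longleftrightarrow> M"
    and "((cmod b \<le> cmod a \<longrightarrow>
              cmod (complex_of_real ((cmod l0)\<^sup>2) * b - cnj a * q)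
                + cmod l0 * cmod (a - cnj b * q) + real N * (cmod q)\<^sup>2
              \<le> real N * (cmod l0)\<^sup>2) \<and>
           (cmod a \<le> cmod b \<longrightarrow>
              cmod (complex_of_real ((cmod l0)\<^sup>2) * a - cnj b * q)
                + cmod l0 * cmod (b - cnj a * q) + real N * (cmod q)\<^sup>2
              \<le> real N * (cmod l0)\<^sup>2)) \<longleftrightarrow> M"
    and "M \<Longrightarrow> cmod q \<le> cmod l0"
proof -
  define x1 where "x1 = a / of_nat N"
  define x2 where "x2 = b / of_nat N"
  define r where "r = cmod l0"
  have r0: "0 < r" and r1: "r < 1" using l0 by (auto simp: r_def)
  have E1': "inE x1 x2 q" using E1 by (simp add: x1_def x2_def)
  have E2': "inE x2 x1 q" using E1' inE_sym by blast
  have h2: "cmod x2 < 1" by (rule inE_x2[OF E1'])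
  have h1: "cmod x1 < 1" by (rule inE_x1[OF E1'])
  have Nr: "real N > 0" using N0 by simp
  have dx: "cmod x2 \<le> cmod x1 \<longleftrightarrow> cmod b \<le> cmod a" using Nr by (simp add: x1_def x2_def norm_divide divide_le_cancel)
  have dx': "cmod x1 \<le> cmod x2 \<longleftrightarrow> cmod a \<le> cmod b" using Nr by (simp add: x1_def x2_def norm_divide divide_le_cancel)
  have bl: "cmod b < real N" using h2 Nr by (simp add: x2_def norm_divide divide_less_eq)
  have al: "cmod a < real N" using h1 Nr by (simp add: x1_def x2_def norm_divide divide_less_eq)
  have H1': "H1 = KK x1 x2 q" using H1 by (simp add: x1_def x2_def)
  have H2': "H2 = KK x2 x1 q" using H2 by (simp add: x1_def x2_def)
  have ab: "b * a = a * b" by (simp add: mult.commute)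
  have P3M: "((cmod b \<le> cmod a \<longrightarrow> H1 \<le> r) \<and> (cmod a \<le> cmod b \<longrightarrow> H2 \<le> r)) \<longleftrightarrow> M"
  proof
    assume A: "(cmod b \<le> cmod a \<longrightarrow> H1 \<le> r) \<and> (cmod a \<le> cmod b \<longrightarrow> H2 \<le> r)"
    show M
    proof (cases "cmod b \<le> cmod a")
      case True
      then have "H1 \<le> r" using A by blast
      moreover have "H2 \<le> H1" unfolding H1' H2' by (rule KK_cmp[OF E1']) (use True dx in simp)
      ultimately show M by (simp add: M_def r_def)
    next
      case False
      then have "H2 \<le> r" using A by simp
      moreover have "H1 \<le> H2" unfolding H1' H2' by (rule KK_cmp[OF E2']) (use False dx' in simp)
      ultimately show M by (simp add: M_def r_def)
    qed
  next
    assume M then show "(cmod b \<le> cmod a \<longrightarrow> H1 \<le> r) \<and> (cmod a \<le> cmod b \<longrightarrow> H2 \<le> r)"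
      by (simp add: M_def r_def)
  qed
  then show "((cmod b \<le> cmod a \<longrightarrow> H1 \<le> cmod l0) \<and> (cmod a \<le> cmod b \<longrightarrow> H2 \<le> cmod l0)) \<longleftrightarrow> M"
    by (simp add: r_def)
  have t4a: "(real N * cmod (a - cnj b * q) + cmod (a * b - (of_nat N)\<^sup>2 * q)) / ((real N)\<^sup>2 - (cmod b)\<^sup>2) = H1"
    unfolding H1 by (rule T4[OF N0 bl])
  have t4b: "(real N * cmod (b - cnj a * q) + cmod (a * b - (of_nat N)\<^sup>2 * q)) / ((real N)\<^sup>2 - (cmod a)\<^sup>2) = H2"
    unfolding H2 using T4[OF N0 al, of b q] by (simp add: ab)
  show "((cmod b \<le> cmod a \<longrightarrow>
              (real N * cmod (a - cnj b * q) + cmod (a * b - (of_nat N)\<^sup>2 * q))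
               / ((real N)\<^sup>2 - (cmod b)\<^sup>2) \<le> cmod l0) \<and>
           (cmod a \<le> cmod b \<longrightarrow>
              (real N * cmod (b - cnj a * q) + cmod (a * b - (of_nat N)\<^sup>2 * q))
               / ((real N)\<^sup>2 - (cmod a)\<^sup>2) \<le> cmod l0)) \<longleftrightarrow> M"
    unfolding t4a t4b using P3M by (simp add: r_def)
  have c5a: "(\<forall>z\<in>ball 0 1. \<forall>w\<in>ball 0 1. of_nat N * l0 - a * z - b * l0 * w + of_nat N * q * z * w \<noteq> 0) \<longleftrightarrow> H1 \<le> r"
    unfolding T5[OF N0] H1' r_def x1_def x2_def by (rule cond5) (use h2 l0 in \<open>simp_all add: x2_def\<close>)
  have c5b: "(\<forall>z\<in>ball 0 1. \<forall>w\<in>ball 0 1. of_nat N * l0 - b * z - a * l0 * w + of_nat N * q * z * w \<noteq> 0) \<longleftrightarrow> H2 \<le> r"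
    unfolding T5[OF N0] H2' r_def x1_def x2_def by (rule cond5) (use h1 l0 in \<open>simp_all add: x1_def\<close>)
  show "((cmod b \<le> cmod a \<longrightarrow>
              (\<forall>z\<in>ball 0 1. \<forall>w\<in>ball 0 1.
                 of_nat N * l0 - a * z - b * l0 * w + of_nat N * q * z * w \<noteq> 0)) \<and>
           (cmod a \<le> cmod b \<longrightarrow>
              (\<forall>z\<in>ball 0 1. \<forall>w\<in>ball 0 1.
                 of_nat N * l0 - b * z - a * l0 * w + of_nat N * q * z * w \<noteq> 0))) \<longleftrightarrow> M"
    unfolding c5a c5b using P3M by simp
  show "((cmod b \<le> cmod a \<longrightarrow>
              (cmod a)\<^sup>2 + (cmod l0)\<^sup>2 * (cmod b)\<^sup>2 - (real N)\<^sup>2 * (cmod q)\<^sup>2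
                + 2 * cmod l0 * cmod (a * b - (of_nat N)\<^sup>2 * q)
              \<le> (real N)\<^sup>2 * (cmod l0)\<^sup>2) \<and>
           (cmod a \<le> cmod b \<longrightarrow>
              (cmod b)\<^sup>2 + (cmod l0)\<^sup>2 * (cmod a)\<^sup>2 - (real N)\<^sup>2 * (cmod q)\<^sup>2
                + 2 * cmod l0 * cmod (a * b - (of_nat N)\<^sup>2 * q)
              \<le> (real N)\<^sup>2 * (cmod l0)\<^sup>2)) \<longleftrightarrow> M" if qr: "cmod q \<le> cmod l0"
  proof -
    have c6a: "cmod b \<le> cmod a \<Longrightarrow> ((cmod a)\<^sup>2 + (cmod l0)\<^sup>2 * (cmod b)\<^sup>2 - (real N)\<^sup>2 * (cmod q)\<^sup>2
                + 2 * cmod l0 * cmod (a * b - (of_nat N)\<^sup>2 * q)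
              \<le> (real N)\<^sup>2 * (cmod l0)\<^sup>2) \<longleftrightarrow> H1 \<le> r"
    proof -
      assume d: "cmod b \<le> cmod a"
      have "KK x1 x2 q \<le> r \<longleftrightarrow> cmod q \<le> r \<and> (cmod x1)^2 + r^2 * (cmod x2)^2 - (cmod q)^2 + 2 * r * cmod (x1 * x2 - q) \<le> r^2"
        by (rule cond6[OF h2 _ r0 r1]) (use d dx in simp)
      then show ?thesis unfolding T6[OF N0] H1' using qr by (simp add: r_def x1_def x2_def)
    qed
    have c6b: "cmod a \<le> cmod b \<Longrightarrow> ((cmod b)\<^sup>2 + (cmod l0)\<^sup>2 * (cmod a)\<^sup>2 - (real N)\<^sup>2 * (cmod q)\<^sup>2
                + 2 * cmod l0 * cmod (a * b - (of_nat N)\<^sup>2 * q)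
              \<le> (real N)\<^sup>2 * (cmod l0)\<^sup>2) \<longleftrightarrow> H2 \<le> r"
    proof -
      assume d: "cmod a \<le> cmod b"
      have "KK x2 x1 q \<le> r \<longleftrightarrow> cmod q \<le> r \<and> (cmod x2)^2 + r^2 * (cmod x1)^2 - (cmod q)^2 + 2 * r * cmod (x2 * x1 - q) \<le> r^2"
        by (rule cond6[OF h1 _ r0 r1]) (use d dx' in simp)
      moreover have "(cmod b)\<^sup>2 + (cmod l0)\<^sup>2 * (cmod a)\<^sup>2 - (real N)\<^sup>2 * (cmod q)\<^sup>2
                + 2 * cmod l0 * cmod (a * b - (of_nat N)\<^sup>2 * q)
              \<le> (real N)\<^sup>2 * (cmod l0)\<^sup>2 \<longleftrightarrow> (cmod x2)^2 + r^2 * (cmod x1)^2 - (cmod q)^2 + 2 * r * cmod (x2 * x1 - q) \<le> r^2"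
        using T6[OF N0, of b "cmod l0" a q] by (simp add: ab r_def x1_def x2_def)
      ultimately show ?thesis unfolding H2' using qr by (simp add: r_def)
    qed
    show ?thesis using c6a c6b P3M by blast
  qed
  have c7a: "cmod b \<le> cmod a \<Longrightarrow> (cmod (complex_of_real ((cmod l0)\<^sup>2) * b - cnj a * q)
                + cmod l0 * cmod (a - cnj b * q) + real N * (cmod q)\<^sup>2
              \<le> real N * (cmod l0)\<^sup>2) \<longleftrightarrow> H1 \<le> r"
  proof -
    assume d: "cmod b \<le> cmod a"
    have "KK x1 x2 q \<le> r \<longleftrightarrow> cmod (complex_of_real (r^2) * x2 - cnj x1 * q) + r * cmod (x1 - cnj x2 * q) + (cmod q)^2 \<le> r^2"
      by (rule cond7[OF h2 _ r0 r1]) (use d dx in simp)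
    then show ?thesis unfolding T7[OF N0] H1' by (simp add: r_def x1_def x2_def)
  qed
  have c7b: "cmod a \<le> cmod b \<Longrightarrow> (cmod (complex_of_real ((cmod l0)\<^sup>2) * a - cnj b * q)
                + cmod l0 * cmod (b - cnj a * q) + real N * (cmod q)\<^sup>2
              \<le> real N * (cmod l0)\<^sup>2) \<longleftrightarrow> H2 \<le> r"
  proof -
    assume d: "cmod a \<le> cmod b"
    have "KK x2 x1 q \<le> r \<longleftrightarrow> cmod (complex_of_real (r^2) * x1 - cnj x2 * q) + r * cmod (x2 - cnj x1 * q) + (cmod q)^2 \<le> r^2"
      by (rule cond7[OF h1 _ r0 r1]) (use d dx' in simp)
    then show ?thesis unfolding T7[OF N0] H2' by (simp add: r_def x1_def x2_def)
  qed
  show "((cmod b \<le> cmod a \<longrightarrow>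
              cmod (complex_of_real ((cmod l0)\<^sup>2) * b - cnj a * q)
                + cmod l0 * cmod (a - cnj b * q) + real N * (cmod q)\<^sup>2
              \<le> real N * (cmod l0)\<^sup>2) \<and>
           (cmod a \<le> cmod b \<longrightarrow>
              cmod (complex_of_real ((cmod l0)\<^sup>2) * a - cnj b * q)
                + cmod l0 * cmod (b - cnj a * q) + real N * (cmod q)\<^sup>2
              \<le> real N * (cmod l0)\<^sup>2)) \<longleftrightarrow> M"
    using c7a c7b P3M by blast
  show "M \<Longrightarrow> cmod q \<le> cmod l0"
  proof -
    assume M
    have "cmod q \<le> KK x1 x2 q" by (rule x3_le[OF h2])
    then show ?thesis using \<open>M\<close> H1' by (simp add: M_def)
  qed
qed


definition c3 :: "nat \<Rightarrow> (nat \<Rightarrow> complex) \<Rightarrow> complex \<Rightarrow> nat \<Rightarrow> bool" where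
  "c3 n y l0 j \<longleftrightarrow> (norm (y (n - j)) \<le> norm (y j) \<longrightarrow> Hinf_Phi n j y \<le> norm l0) \<and>
           (norm (y j) \<le> norm (y (n - j)) \<longrightarrow> Hinf_Phi n (n - j) y \<le> norm l0)"

definition c4 :: "nat \<Rightarrow> (nat \<Rightarrow> complex) \<Rightarrow> complex \<Rightarrow> nat \<Rightarrow> bool" where
  "c4 n y l0 j \<longleftrightarrow> (norm (y (n - j)) \<le> norm (y j) \<longrightarrow>
              (real (n choose j) * norm (y j - cnj (y (n - j)) * y n)
                 + norm (y j * y (n - j) - (bc n j)\<^sup>2 * y n))
               / ((real (n choose j))\<^sup>2 - (norm (y (n - j)))\<^sup>2) \<le> norm l0) \<and>
           (norm (y j) \<le> norm (y (n - j)) \<longrightarrow>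
              (real (n choose j) * norm (y (n - j) - cnj (y j) * y n)
                 + norm (y j * y (n - j) - (bc n j)\<^sup>2 * y n))
               / ((real (n choose j))\<^sup>2 - (norm (y j))\<^sup>2) \<le> norm l0)"

definition c5 :: "nat \<Rightarrow> (nat \<Rightarrow> complex) \<Rightarrow> complex \<Rightarrow> nat \<Rightarrow> bool" where
  "c5 n y l0 j \<longleftrightarrow> (norm (y (n - j)) \<le> norm (y j) \<longrightarrow>
              (\<forall>z\<in>ball 0 1. \<forall>w\<in>ball 0 1.
                 bc n j * l0 - y j * z - y (n - j) * l0 * w + bc n j * y n * z * w \<noteq> 0)) \<and>
           (norm (y j) \<le> norm (y (n - j)) \<longrightarrow>
              (\<forall>z\<in>ball 0 1. \<forall>w\<in>ball 0 1.
                 bc n j * l0 - y (n - j) * z - y j * l0 * w + bc n j * y n * z * w \<noteq> 0))"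

definition c6 :: "nat \<Rightarrow> (nat \<Rightarrow> complex) \<Rightarrow> complex \<Rightarrow> nat \<Rightarrow> bool" where
  "c6 n y l0 j \<longleftrightarrow> (norm (y (n - j)) \<le> norm (y j) \<longrightarrow>
              (norm (y j))\<^sup>2 + (norm l0)\<^sup>2 * (norm (y (n - j)))\<^sup>2 - (real (n choose j))\<^sup>2 * (norm (y n))\<^sup>2
                + 2 * norm l0 * norm (y j * y (n - j) - (bc n j)\<^sup>2 * y n)
              \<le> (real (n choose j))\<^sup>2 * (norm l0)\<^sup>2) \<and>
           (norm (y j) \<le> norm (y (n - j)) \<longrightarrow>
              (norm (y (n - j)))\<^sup>2 + (norm l0)\<^sup>2 * (norm (y j))\<^sup>2 - (real (n choose j))\<^sup>2 * (norm (y n))\<^sup>2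
                + 2 * norm l0 * norm (y j * y (n - j) - (bc n j)\<^sup>2 * y n)
              \<le> (real (n choose j))\<^sup>2 * (norm l0)\<^sup>2)"

definition c7 :: "nat \<Rightarrow> (nat \<Rightarrow> complex) \<Rightarrow> complex \<Rightarrow> nat \<Rightarrow> bool" where
  "c7 n y l0 j \<longleftrightarrow> (norm (y (n - j)) \<le> norm (y j) \<longrightarrow>
              norm (complex_of_real ((norm l0)\<^sup>2) * y (n - j) - cnj (y j) * y n)
                + norm l0 * norm (y j - cnj (y (n - j)) * y n) + real (n choose j) * (norm (y n))\<^sup>2
              \<le> real (n choose j) * (norm l0)\<^sup>2) \<and>
           (norm (y j) \<le> norm (y (n - j)) \<longrightarrow>
              norm (complex_of_real ((norm l0)\<^sup>2) * y j - cnj (y (n - j)) * y n)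
                + norm l0 * norm (y (n - j) - cnj (y j) * y n) + real (n choose j) * (norm (y n))\<^sup>2
              \<le> real (n choose j) * (norm l0)\<^sup>2)"

lemma main_pred:
  fixes n :: nat and l0 :: complex and y :: "nat \<Rightarrow> complex"
  assumes hn: "n \<ge> 2"
    and hl: "l0 \<in> ball 0 1 - {0}"
    and hy: "tG n y"
    and hJ: "Jn n y \<or> n \<le> 3"
  shows
   "((\<exists>\<psi> :: complex \<Rightarrow> nat \<Rightarrow> complex.
        (\<forall>k\<in>{1..n}. (\<lambda>z. \<psi> z k) holomorphic_on ball 0 1) \<and>
        (\<forall>z\<in>ball 0 1. tG n (\<psi> z)) \<and>
        (\<forall>k\<in>{1..n}. \<psi> 0 k = 0) \<and>
        (\<forall>k\<in>{1..n}. \<psi> l0 k = y k))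
     \<longleftrightarrow> Max ((\<lambda>j. Hinf_Phi n j y) ` {1..n-1}) \<le> norm l0)
  \<and> (Max ((\<lambda>j. Hinf_Phi n j y) ` {1..n-1}) \<le> norm l0 \<longleftrightarrow> (\<forall>j\<in>{1..n div 2}. c3 n y l0 j))
  \<and> ((\<forall>j\<in>{1..n div 2}. c3 n y l0 j) \<longleftrightarrow> (\<forall>j\<in>{1..n div 2}. c4 n y l0 j))
  \<and> ((\<forall>j\<in>{1..n div 2}. c4 n y l0 j) \<longleftrightarrow> (\<forall>j\<in>{1..n div 2}. c5 n y l0 j))
  \<and> ((\<forall>j\<in>{1..n div 2}. c5 n y l0 j) \<longleftrightarrow> (norm (y n) \<le> norm l0 \<and> (\<forall>j\<in>{1..n div 2}. c6 n y l0 j)))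
  \<and> ((norm (y n) \<le> norm l0 \<and> (\<forall>j\<in>{1..n div 2}. c6 n y l0 j)) \<longleftrightarrow> (\<forall>j\<in>{1..n div 2}. c7 n y l0 j))"
proof -
  have l0n: "l0 \<noteq> 0" and l0b: "cmod l0 < 1" using hl by auto
  have J: "Jn n y" using hJ Jn_small[OF hn _ hy] by blast
  define M where "M = (\<lambda>j. Hinf_Phi n j y \<le> norm l0 \<and> Hinf_Phi n (n - j) y \<le> norm l0)"
  have PJ: "(c3 n y l0 j \<longleftrightarrow> M j) \<and> (c4 n y l0 j \<longleftrightarrow> M j) \<and> (c5 n y l0 j \<longleftrightarrow> M j)
      \<and> (norm (y n) \<le> norm l0 \<longrightarrow> (c6 n y l0 j \<longleftrightarrow> M j)) \<and> (c7 n y l0 j \<longleftrightarrow> M j)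
      \<and> (M j \<longrightarrow> norm (y n) \<le> norm l0)" if j: "j \<in> {1..n div 2}" for j
  proof -
    have j1: "j \<in> {1..n-1}" and j2: "n - j \<in> {1..n-1}" and nn: "n - (n - j) = j" and jn: "j \<le> n"
      using j hn by auto
    have N0: "n choose j > 0" using jn by simp
    have E1: "inE (y j / of_nat (n choose j)) (y (n - j) / of_nat (n choose j)) (y n)"
      using tG_pair[OF hn hy j1] by simp
    have H1: "Hinf_Phi n j y = KK (y j / of_nat (n choose j)) (y (n - j) / of_nat (n choose j)) (y n)"
      using Hinf_KK[OF hn hy j1] by simp
    have H2: "Hinf_Phi n (n - j) y = KK (y (n - j) / of_nat (n choose j)) (y j / of_nat (n choose j)) (y n)"
      using Hinf_KK[OF hn hy j2] unfolding nn bc_sym[OF jn] by simp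
    note P = perj[OF N0 E1 H1 H2 l0n l0b]
    show ?thesis using P unfolding c3_def c4_def c5_def c6_def c7_def M_def by blast
  qed
  have fin: "finite ((\<lambda>j. Hinf_Phi n j y) ` {1..n-1})" by simp
  have ne: "(\<lambda>j. Hinf_Phi n j y) ` {1..n-1} \<noteq> {}" using hn by auto
  have MX: "Max ((\<lambda>j. Hinf_Phi n j y) ` {1..n-1}) \<le> norm l0 \<longleftrightarrow> (\<forall>k\<in>{1..n-1}. Hinf_Phi n k y \<le> norm l0)"
    using Max_le_iff[OF fin ne] by blast
  have AM: "(\<forall>k\<in>{1..n-1}. Hinf_Phi n k y \<le> norm l0) \<longleftrightarrow> (\<forall>j\<in>{1..n div 2}. M j)"
  proof
    assume A: "\<forall>k\<in>{1..n-1}. Hinf_Phi n k y \<le> norm l0"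
    show "\<forall>j\<in>{1..n div 2}. M j"
    proof
      fix j assume "j \<in> {1..n div 2}"
      then have "j \<in> {1..n-1}" "n - j \<in> {1..n-1}" using hn by auto
      then show "M j" using A by (simp add: M_def)
    qed
  next
    assume A: "\<forall>j\<in>{1..n div 2}. M j"
    show "\<forall>k\<in>{1..n-1}. Hinf_Phi n k y \<le> norm l0"
    proof
      fix k assume k: "k \<in> {1..n-1}"
      show "Hinf_Phi n k y \<le> norm l0"
      proof (cases "k \<le> n div 2")
        case True
        then have "k \<in> {1..n div 2}" using k by simp
        then show ?thesis using A by (simp add: M_def)
      next
        case False
        then have jj: "n - k \<in> {1..n div 2}" and nk: "n - (n - k) = k" using k by auto
        then show ?thesis using A nk by (metis M_def)
      qed
    qed
  qed
  have S1: "(\<exists>\<psi> :: complex \<Rightarrow> nat \<Rightarrow> complex.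
        (\<forall>k\<in>{1..n}. (\<lambda>z. \<psi> z k) holomorphic_on ball 0 1) \<and>
        (\<forall>z\<in>ball 0 1. tG n (\<psi> z)) \<and>
        (\<forall>k\<in>{1..n}. \<psi> 0 k = 0) \<and>
        (\<forall>k\<in>{1..n}. \<psi> l0 k = y k))
     \<longleftrightarrow> Max ((\<lambda>j. Hinf_Phi n j y) ` {1..n-1}) \<le> norm l0"
  proof
    assume "\<exists>\<psi> :: complex \<Rightarrow> nat \<Rightarrow> complex.
        (\<forall>k\<in>{1..n}. (\<lambda>z. \<psi> z k) holomorphic_on ball 0 1) \<and>
        (\<forall>z\<in>ball 0 1. tG n (\<psi> z)) \<and>
        (\<forall>k\<in>{1..n}. \<psi> 0 k = 0) \<and>
        (\<forall>k\<in>{1..n}. \<psi> l0 k = y k)"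
    then obtain \<psi> :: "complex \<Rightarrow> nat \<Rightarrow> complex" where p:
        "\<forall>k\<in>{1..n}. (\<lambda>z. \<psi> z k) holomorphic_on ball 0 1"
        "\<forall>z\<in>ball 0 1. tG n (\<psi> z)"
        "\<forall>k\<in>{1..n}. \<psi> 0 k = 0"
        "\<forall>k\<in>{1..n}. \<psi> l0 k = y k" by blast
    have "\<forall>j\<in>{1..n-1}. Hinf_Phi n j y \<le> cmod l0" by (rule schwarz_part[OF hn hl p])
    then show "Max ((\<lambda>j. Hinf_Phi n j y) ` {1..n-1}) \<le> norm l0" using MX by simp
  next
    assume "Max ((\<lambda>j. Hinf_Phi n j y) ` {1..n-1}) \<le> norm l0"
    then have "\<forall>k\<in>{1..n-1}. Hinf_Phi n k y \<le> cmod l0" using MX by simp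
    then show "\<exists>\<psi> :: complex \<Rightarrow> nat \<Rightarrow> complex.
        (\<forall>k\<in>{1..n}. (\<lambda>z. \<psi> z k) holomorphic_on ball 0 1) \<and>
        (\<forall>z\<in>ball 0 1. tG n (\<psi> z)) \<and>
        (\<forall>k\<in>{1..n}. \<psi> 0 k = 0) \<and>
        (\<forall>k\<in>{1..n}. \<psi> l0 k = y k)" by (rule construct_G[OF hn J hl])
  qed
  have one: "1 \<in> {1..n div 2}" using hn by auto
  have q3: "(\<forall>j\<in>{1..n div 2}. M j) \<Longrightarrow> norm (y n) \<le> norm l0" using PJ[OF one] one by blast
  have S2: "Max ((\<lambda>j. Hinf_Phi n j y) ` {1..n-1}) \<le> norm l0 \<longleftrightarrow> (\<forall>j\<in>{1..n div 2}. c3 n y l0 j)"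
    using MX AM PJ by blast
  have S3: "(\<forall>j\<in>{1..n div 2}. c3 n y l0 j) \<longleftrightarrow> (\<forall>j\<in>{1..n div 2}. c4 n y l0 j)" using PJ by blast
  have S4: "(\<forall>j\<in>{1..n div 2}. c4 n y l0 j) \<longleftrightarrow> (\<forall>j\<in>{1..n div 2}. c5 n y l0 j)" using PJ by blast
  have S5: "(\<forall>j\<in>{1..n div 2}. c5 n y l0 j) \<longleftrightarrow> (norm (y n) \<le> norm l0 \<and> (\<forall>j\<in>{1..n div 2}. c6 n y l0 j))"
    using PJ q3 by blast
  have S6: "(norm (y n) \<le> norm l0 \<and> (\<forall>j\<in>{1..n div 2}. c6 n y l0 j)) \<longleftrightarrow> (\<forall>j\<in>{1..n div 2}. c7 n y l0 j)"
    using PJ q3 by blast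
  show ?thesis using S1 S2 S3 S4 S5 S6 by blast
qed

theorem mainTheorem13:
  fixes n :: nat and l0 :: complex and y :: "nat \<Rightarrow> complex"
  assumes hn: "n \<ge> 2"
    and hl: "l0 \<in> ball 0 1 - {0}"
    and hy: "tG n y"
    and hJ: "Jn n y \<or> n \<le> 3"
  defines "C \<equiv> \<lambda>j. real (n choose j)"
  shows
   "((\<exists>\<psi> :: complex \<Rightarrow> nat \<Rightarrow> complex.
        (\<forall>k\<in>{1..n}. (\<lambda>z. \<psi> z k) holomorphic_on ball 0 1) \<and>
        (\<forall>z\<in>ball 0 1. tG n (\<psi> z)) \<and>
        (\<forall>k\<in>{1..n}. \<psi> 0 k = 0) \<and>
        (\<forall>k\<in>{1..n}. \<psi> l0 k = y k))
     \<longleftrightarrow> Max ((\<lambda>j. Hinf_Phi n j y) ` {1..n-1}) \<le> norm l0)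
  \<and> (Max ((\<lambda>j. Hinf_Phi n j y) ` {1..n-1}) \<le> norm l0
     \<longleftrightarrow> (\<forall>j\<in>{1..n div 2}.
           (norm (y (n - j)) \<le> norm (y j) \<longrightarrow> Hinf_Phi n j y \<le> norm l0) \<and>
           (norm (y j) \<le> norm (y (n - j)) \<longrightarrow> Hinf_Phi n (n - j) y \<le> norm l0)))
  \<and> ((\<forall>j\<in>{1..n div 2}.
           (norm (y (n - j)) \<le> norm (y j) \<longrightarrow> Hinf_Phi n j y \<le> norm l0) \<and>
           (norm (y j) \<le> norm (y (n - j)) \<longrightarrow> Hinf_Phi n (n - j) y \<le> norm l0))
     \<longleftrightarrow> (\<forall>j\<in>{1..n div 2}.
           (norm (y (n - j)) \<le> norm (y j) \<longrightarrow>
              (C j * norm (y j - cnj (y (n - j)) * y n)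
                 + norm (y j * y (n - j) - (bc n j)\<^sup>2 * y n))
               / ((C j)\<^sup>2 - (norm (y (n - j)))\<^sup>2) \<le> norm l0) \<and>
           (norm (y j) \<le> norm (y (n - j)) \<longrightarrow>
              (C j * norm (y (n - j) - cnj (y j) * y n)
                 + norm (y j * y (n - j) - (bc n j)\<^sup>2 * y n))
               / ((C j)\<^sup>2 - (norm (y j))\<^sup>2) \<le> norm l0)))
  \<and> ((\<forall>j\<in>{1..n div 2}.
           (norm (y (n - j)) \<le> norm (y j) \<longrightarrow>
              (C j * norm (y j - cnj (y (n - j)) * y n)
                 + norm (y j * y (n - j) - (bc n j)\<^sup>2 * y n))
               / ((C j)\<^sup>2 - (norm (y (n - j)))\<^sup>2) \<le> norm l0) \<and>
           (norm (y j) \<le> norm (y (n - j)) \<longrightarrow>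
              (C j * norm (y (n - j) - cnj (y j) * y n)
                 + norm (y j * y (n - j) - (bc n j)\<^sup>2 * y n))
               / ((C j)\<^sup>2 - (norm (y j))\<^sup>2) \<le> norm l0))
     \<longleftrightarrow> (\<forall>j\<in>{1..n div 2}.
           (norm (y (n - j)) \<le> norm (y j) \<longrightarrow>
              (\<forall>z\<in>ball 0 1. \<forall>w\<in>ball 0 1.
                 bc n j * l0 - y j * z - y (n - j) * l0 * w + bc n j * y n * z * w \<noteq> 0)) \<and>
           (norm (y j) \<le> norm (y (n - j)) \<longrightarrow>
              (\<forall>z\<in>ball 0 1. \<forall>w\<in>ball 0 1.
                 bc n j * l0 - y (n - j) * z - y j * l0 * w + bc n j * y n * z * w \<noteq> 0))))
  \<and> ((\<forall>j\<in>{1..n div 2}.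
           (norm (y (n - j)) \<le> norm (y j) \<longrightarrow>
              (\<forall>z\<in>ball 0 1. \<forall>w\<in>ball 0 1.
                 bc n j * l0 - y j * z - y (n - j) * l0 * w + bc n j * y n * z * w \<noteq> 0)) \<and>
           (norm (y j) \<le> norm (y (n - j)) \<longrightarrow>
              (\<forall>z\<in>ball 0 1. \<forall>w\<in>ball 0 1.
                 bc n j * l0 - y (n - j) * z - y j * l0 * w + bc n j * y n * z * w \<noteq> 0)))
     \<longleftrightarrow> (norm (y n) \<le> norm l0 \<and>
          (\<forall>j\<in>{1..n div 2}.
           (norm (y (n - j)) \<le> norm (y j) \<longrightarrow>
              (norm (y j))\<^sup>2 + (norm l0)\<^sup>2 * (norm (y (n - j)))\<^sup>2 - (C j)\<^sup>2 * (norm (y n))\<^sup>2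
                + 2 * norm l0 * norm (y j * y (n - j) - (bc n j)\<^sup>2 * y n)
              \<le> (C j)\<^sup>2 * (norm l0)\<^sup>2) \<and>
           (norm (y j) \<le> norm (y (n - j)) \<longrightarrow>
              (norm (y (n - j)))\<^sup>2 + (norm l0)\<^sup>2 * (norm (y j))\<^sup>2 - (C j)\<^sup>2 * (norm (y n))\<^sup>2
                + 2 * norm l0 * norm (y j * y (n - j) - (bc n j)\<^sup>2 * y n)
              \<le> (C j)\<^sup>2 * (norm l0)\<^sup>2))))
  \<and> ((norm (y n) \<le> norm l0 \<and>
          (\<forall>j\<in>{1..n div 2}.
           (norm (y (n - j)) \<le> norm (y j) \<longrightarrow>
              (norm (y j))\<^sup>2 + (norm l0)\<^sup>2 * (norm (y (n - j)))\<^sup>2 - (C j)\<^sup>2 * (norm (y n))\<^sup>2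
                + 2 * norm l0 * norm (y j * y (n - j) - (bc n j)\<^sup>2 * y n)
              \<le> (C j)\<^sup>2 * (norm l0)\<^sup>2) \<and>
           (norm (y j) \<le> norm (y (n - j)) \<longrightarrow>
              (norm (y (n - j)))\<^sup>2 + (norm l0)\<^sup>2 * (norm (y j))\<^sup>2 - (C j)\<^sup>2 * (norm (y n))\<^sup>2
                + 2 * norm l0 * norm (y j * y (n - j) - (bc n j)\<^sup>2 * y n)
              \<le> (C j)\<^sup>2 * (norm l0)\<^sup>2)))
     \<longleftrightarrow> (\<forall>j\<in>{1..n div 2}.
           (norm (y (n - j)) \<le> norm (y j) \<longrightarrow>
              norm (complex_of_real ((norm l0)\<^sup>2) * y (n - j) - cnj (y j) * y n)
                + norm l0 * norm (y j - cnj (y (n - j)) * y n) + C j * (norm (y n))\<^sup>2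
              \<le> C j * (norm l0)\<^sup>2) \<and>
           (norm (y j) \<le> norm (y (n - j)) \<longrightarrow>
              norm (complex_of_real ((norm l0)\<^sup>2) * y j - cnj (y (n - j)) * y n)
                + norm l0 * norm (y (n - j) - cnj (y j) * y n) + C j * (norm (y n))\<^sup>2
              \<le> C j * (norm l0)\<^sup>2)))"
proof -
  show ?thesis using main_pred[OF hn hl hy hJ]
    unfolding c3_def c4_def c5_def c6_def c7_def C_def .
qed


end
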